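(* Let $\omega$ be a rectilinearly-convex obstacle, and let $S$ be a finite set of closed line segments inside $\omega$ such that (1) $S$ intersects each of the four extreme edges of $\omega$ and (2) $\bigcup_{s\in S}s$ is connected. Then $S$ is a skeleton for $\omega$.
   Context: An obstacle $\omega$ is a simple polygon in $\mathbb{R}^2$ (a closed, bounded polygonal region without holes whose boundary does not intersect itself), assumed in general position (no three of its vertices are collinear); edges of $\omega$ are those of its boundary. $\omega$ is rectilinear if each edge is horizontal or vertical, and a rectilinear obstacle is rectilinearly-convex if any two points of $\omega$ can be joined by a shortest rectilinear path (made of horizontal and vertical segments, of minimum $\ell_1$ length) contained in $\omega$. A corner point of a rectilinear path is a point where a horizontal and a vertical segment of the path meet. A set $S$ of closed line segments is inside $\omega$ if the union of its elements is contained in $\omega$. Such an $S$ is a skeleton for $\omega$ if for every pair of points $p,q$ not in the interior of $\omega$ such that every shortest rectilinear path between $p$ and $q$ with at most one corner point meets the interior of $\omega$, each such path intersects some element of $S$. The bounding box $B(\omega)$ is the smallest closed axis-parallel rectangle containing $\omega$; the extreme edges of $\omega$ are the edges of $\omega$ lying on the boundary of $B(\omega)$ (a rectilinearly-convex obstacle has exactly four: left, right, bottom, top). *)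

theory Defs
  imports "HOL-Analysis.Analysis"
begin

type_synonym pt = "real \<times> real"

definition poly_edge :: "pt list \<Rightarrow> nat \<Rightarrow> pt set" where
  "poly_edge vs i = closed_segment (vs ! i) (vs ! ((i + 1) mod length vs))"

definition poly_edges :: "pt list \<Rightarrow> pt set set" where
  "poly_edges vs = {poly_edge vs i | i. i < length vs}"

definition poly_boundary :: "pt list \<Rightarrow> pt set" where
  "poly_boundary vs = \<Union>(poly_edges vs)"

definition simple_polygon :: "pt list \<Rightarrow> bool" where
  "simple_polygon vs \<longleftrightarrow> length vs \<ge> 3 \<and> distinct vs \<and>
     (\<forall>i < length vs. \<forall>j < length vs. i \<noteq> j \<longrightarrow>
        (if j = (i + 1) mod length vs then poly_edge vs i \<inter> poly_edge vs j = {vs ! j}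
         else if i = (j + 1) mod length vs then poly_edge vs i \<inter> poly_edge vs j = {vs ! i}
         else poly_edge vs i \<inter> poly_edge vs j = {}))"

definition poly_region :: "pt list \<Rightarrow> pt set" where
  "poly_region vs = poly_boundary vs \<union> inside (poly_boundary vs)"

definition general_position :: "pt list \<Rightarrow> bool" where
  "general_position vs \<longleftrightarrow>
     (\<forall>a\<in>set vs. \<forall>b\<in>set vs. \<forall>c\<in>set vs.
        a \<noteq> b \<and> b \<noteq> c \<and> a \<noteq> c \<longrightarrow> \<not> collinear {a, b, c})"

definition rectilinear_polygon :: "pt list \<Rightarrow> bool" where
  "rectilinear_polygon vs \<longleftrightarrow>
     (\<forall>i < length vs. fst (vs ! i) = fst (vs ! ((i + 1) mod length vs))
                    \<or> snd (vs ! i) = snd (vs ! ((i + 1) mod length vs)))"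

definition l1_dist :: "pt \<Rightarrow> pt \<Rightarrow> real" where
  "l1_dist a b = \<bar>fst a - fst b\<bar> + \<bar>snd a - snd b\<bar>"

definition rect_path :: "pt list \<Rightarrow> bool" where
  "rect_path ps \<longleftrightarrow> ps \<noteq> [] \<and>
     (\<forall>i < length ps - 1. fst (ps ! i) = fst (ps ! Suc i) \<or> snd (ps ! i) = snd (ps ! Suc i))"

definition path_set :: "pt list \<Rightarrow> pt set" where
  "path_set ps = set ps \<union> (\<Union>i < length ps - 1. closed_segment (ps ! i) (ps ! Suc i))"

definition path_len :: "pt list \<Rightarrow> real" where
  "path_len ps = (\<Sum>i < length ps - 1. l1_dist (ps ! i) (ps ! Suc i))"

definition rect_path_between :: "pt \<Rightarrow> pt \<Rightarrow> pt list \<Rightarrow> bool" where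
  "rect_path_between p q ps \<longleftrightarrow> rect_path ps \<and> hd ps = p \<and> last ps = q"

definition shortest_rect_path :: "pt \<Rightarrow> pt \<Rightarrow> pt list \<Rightarrow> bool" where
  "shortest_rect_path p q ps \<longleftrightarrow> rect_path_between p q ps \<and>
     (\<forall>ps'. rect_path_between p q ps' \<longrightarrow> path_len ps \<le> path_len ps')"

definition horiz_segs :: "pt list \<Rightarrow> pt set set" where
  "horiz_segs ps = {closed_segment (ps ! i) (ps ! Suc i) | i. i < length ps - 1 \<and>
      snd (ps ! i) = snd (ps ! Suc i) \<and> fst (ps ! i) \<noteq> fst (ps ! Suc i)}"

definition vert_segs :: "pt list \<Rightarrow> pt set set" where
  "vert_segs ps = {closed_segment (ps ! i) (ps ! Suc i) | i. i < length ps - 1 \<and>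
      fst (ps ! i) = fst (ps ! Suc i) \<and> snd (ps ! i) \<noteq> snd (ps ! Suc i)}"

definition corner_points :: "pt list \<Rightarrow> pt set" where
  "corner_points ps = {x. \<exists>h\<in>horiz_segs ps. \<exists>v\<in>vert_segs ps. x \<in> h \<and> x \<in> v}"

definition at_most_one_corner :: "pt list \<Rightarrow> bool" where
  "at_most_one_corner ps \<longleftrightarrow> (\<exists>c. corner_points ps \<subseteq> {c})"

definition rectilinearly_convex :: "pt set \<Rightarrow> bool" where
  "rectilinearly_convex \<omega> \<longleftrightarrow>
     (\<forall>p\<in>\<omega>. \<forall>q\<in>\<omega>. \<exists>ps. shortest_rect_path p q ps \<and> path_set ps \<subseteq> \<omega>)"

definition is_segment :: "pt set \<Rightarrow> bool" where
  "is_segment s \<longleftrightarrow> (\<exists>a b. s = closed_segment a b)"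

definition skeleton :: "pt set \<Rightarrow> pt set set \<Rightarrow> bool" where
  "skeleton \<omega> S \<longleftrightarrow> \<Union>S \<subseteq> \<omega> \<and>
     (\<forall>p q. p \<notin> interior \<omega> \<and> q \<notin> interior \<omega> \<and>
        (\<forall>ps. shortest_rect_path p q ps \<and> at_most_one_corner ps \<longrightarrow>
              path_set ps \<inter> interior \<omega> \<noteq> {}) \<longrightarrow>
        (\<forall>ps. shortest_rect_path p q ps \<and> at_most_one_corner ps \<longrightarrow>
              (\<exists>s\<in>S. path_set ps \<inter> s \<noteq> {})))"

definition bounding_box :: "pt set \<Rightarrow> pt set" where
  "bounding_box \<omega> = {x. Inf (fst ` \<omega>) \<le> fst x \<and> fst x \<le> Sup (fst ` \<omega>) \<and>
                         Inf (snd ` \<omega>) \<le> snd x \<and> snd x \<le> Sup (snd ` \<omega>)}"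

definition extreme_edges :: "pt list \<Rightarrow> pt set set" where
  "extreme_edges vs = {e \<in> poly_edges vs. e \<subseteq> frontier (bounding_box (poly_region vs))}"

end

theory Submission
  imports Defs
begin


definition btw :: "real \<Rightarrow> real \<Rightarrow> real \<Rightarrow> bool" where
  "btw a x b \<longleftrightarrow> (a \<le> x \<and> x \<le> b) \<or> (b \<le> x \<and> x \<le> a)"

lemma seg_h: "closed_segment (a, h) (b, h) = {z::pt. snd z = h \<and> btw a (fst z) b}"
proof -
  have "closed_segment (a, h) (b, h) = (\<lambda>x. (x, h)) ` closed_segment a b"
    unfolding closed_segment_def by (auto simp: image_iff algebra_simps) (metis diff_add_cancel)
  also have "\<dots> = {z::pt. snd z = h \<and> btw a (fst z) b}"
    by (auto simp: closed_segment_eq_real_ivl btw_def image_iff split: if_splits)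
  finally show ?thesis .
qed

lemma seg_v: "closed_segment (h, a) (h, b) = {z::pt. fst z = h \<and> btw a (snd z) b}"
proof -
  have "closed_segment (h, a) (h, b) = (\<lambda>x. (h, x)) ` closed_segment a b"
    unfolding closed_segment_def by (auto simp: image_iff algebra_simps) (metis diff_add_cancel)
  also have "\<dots> = {z::pt. fst z = h \<and> btw a (snd z) b}"
    by (auto simp: closed_segment_eq_real_ivl btw_def image_iff split: if_splits)
  finally show ?thesis .
qed

definition inn :: "pt set \<Rightarrow> pt \<Rightarrow> bool" where
  "inn W t \<longleftrightarrow> (\<exists>r>0. \<forall>x y. \<bar>x - fst t\<bar> < r \<longrightarrow> \<bar>y - snd t\<bar> < r \<longrightarrow> (x, y) \<in> W)"

definition ortho :: "pt set \<Rightarrow> bool" where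
  "ortho W \<longleftrightarrow> (\<forall>a\<in>W. \<forall>b\<in>W. \<forall>x. btw (fst a) x (fst b) \<longrightarrow> (\<exists>y. btw (snd a) y (snd b) \<and> (x, y) \<in> W)) \<and>
              (\<forall>a\<in>W. \<forall>b\<in>W. \<forall>y. btw (snd a) y (snd b) \<longrightarrow> (\<exists>x. btw (fst a) x (fst b) \<and> (x, y) \<in> W))"

lemma orthoX: "ortho W \<Longrightarrow> a \<in> W \<Longrightarrow> b \<in> W \<Longrightarrow> btw (fst a) x (fst b) \<Longrightarrow> \<exists>y. btw (snd a) y (snd b) \<and> (x, y) \<in> W"
  unfolding ortho_def by blast
lemma orthoY: "ortho W \<Longrightarrow> a \<in> W \<Longrightarrow> b \<in> W \<Longrightarrow> btw (snd a) y (snd b) \<Longrightarrow> \<exists>x. btw (fst a) x (fst b) \<and> (x, y) \<in> W"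
  unfolding ortho_def by blast

lemma claim_base:
  assumes "ortho W" "inn W u" "fst u = fst t" "snd u < snd t" "\<not> inn W t"
  shows "(\<forall>a\<in>W. \<not> (fst a < fst t \<and> snd t < snd a)) \<or> (\<forall>b\<in>W. \<not> (fst t < fst b \<and> snd t < snd b))"
proof (rule ccontr)
  assume "\<not> ?thesis"
  then obtain a b where a: "a \<in> W" "fst a < fst t" "snd t < snd a" and b: "b \<in> W" "fst t < fst b" "snd t < snd b" by blast
  obtain r where r: "r > 0" "\<And>x y. \<bar>x - fst u\<bar> < r \<Longrightarrow> \<bar>y - snd u\<bar> < r \<Longrightarrow> (x, y) \<in> W"
    using assms(2) unfolding inn_def by blast
  define m where "m = min (snd a) (snd b)"
  define \<rho> where "\<rho> = min (min r (fst t - fst a)) (min (fst b - fst t) (min (m - snd t) (snd t - snd u)))"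
  have "\<rho> > 0" using a b r assms(4) by (simp add: \<rho>_def m_def)
  have "inn W t" unfolding inn_def
  proof (intro exI[of _ \<rho>] conjI allI impI)
    fix x y assume hx: "\<bar>x - fst t\<bar> < \<rho>" and hy: "\<bar>y - snd t\<bar> < \<rho>"
    have "btw (fst a) x (fst b)" using hx by (auto simp: btw_def \<rho>_def abs_less_iff)
    then obtain h where h: "btw (snd a) h (snd b)" "(x, h) \<in> W" using orthoX[OF assms(1) a(1) b(1)] by blast
    have hm: "m \<le> h" using h(1) by (auto simp: btw_def m_def)
    have xu: "(x, snd u) \<in> W" using r(2)[of x "snd u"] hx assms(3) by (auto simp: \<rho>_def)
    have "btw (snd u) y h" using hy hm by (auto simp: btw_def \<rho>_def abs_less_iff)
    then obtain x' where "btw x x' x" "(x', y) \<in> W" using orthoY[OF assms(1) xu h(2)] by auto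
    then show "(x, y) \<in> W" by (auto simp: btw_def)
  qed (use \<open>\<rho>>0\<close> in auto)
  with assms(5) show False by simp
qed

definition sw :: "pt \<Rightarrow> pt" where "sw z = (snd z, fst z)"
definition nx :: "pt \<Rightarrow> pt" where "nx z = (- fst z, snd z)"
definition ny :: "pt \<Rightarrow> pt" where "ny z = (fst z, - snd z)"

lemma sw_simps[simp]: "fst (sw z) = snd z" "snd (sw z) = fst z" "sw (sw z) = z" "sw (a, b) = (b, a)"
  by (auto simp: sw_def)
lemma nx_simps[simp]: "fst (nx z) = - fst z" "snd (nx z) = snd z" "nx (nx z) = z" "nx (a, b) = (- a, b)"
  by (auto simp: nx_def)
lemma ny_simps[simp]: "fst (ny z) = fst z" "snd (ny z) = - snd z" "ny (ny z) = z" "ny (a, b) = (a, - b)"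
  by (auto simp: ny_def)

lemma mem_sw[simp]: "z \<in> sw ` A \<longleftrightarrow> sw z \<in> A"
  by (metis image_iff sw_simps(3))
lemma mem_nx[simp]: "z \<in> nx ` A \<longleftrightarrow> nx z \<in> A"
  by (metis image_iff nx_simps(3))
lemma mem_ny[simp]: "z \<in> ny ` A \<longleftrightarrow> ny z \<in> A"
  by (metis image_iff ny_simps(3))

lemma btw_neg[simp]: "btw (- a) (- x) (- b) \<longleftrightarrow> btw a x b"
  by (auto simp: btw_def)

lemma ortho_sw: assumes "ortho W" shows "ortho (sw ` W)"
  unfolding ortho_def
proof (intro conjI ballI allI impI)
  fix a b x assume "a \<in> sw`W" "b \<in> sw`W" "btw (fst a) x (fst b)"
  then have "sw a \<in> W" "sw b \<in> W" "btw (snd (sw a)) x (snd (sw b))" by auto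
  from orthoY[OF assms this] obtain y where "btw (fst (sw a)) y (fst (sw b))" "(y,x) \<in> W" by blast
  then show "\<exists>y. btw (snd a) y (snd b) \<and> (x,y) \<in> sw ` W" by auto
next
  fix a b y assume "a \<in> sw`W" "b \<in> sw`W" "btw (snd a) y (snd b)"
  then have "sw a \<in> W" "sw b \<in> W" "btw (fst (sw a)) y (fst (sw b))" by auto
  from orthoX[OF assms this] obtain x where "btw (snd (sw a)) x (snd (sw b))" "(y,x) \<in> W" by blast
  then show "\<exists>x. btw (fst a) x (fst b) \<and> (x,y) \<in> sw ` W" by auto
qed

lemma ortho_nx: assumes "ortho W" shows "ortho (nx ` W)"
  unfolding ortho_def
proof (intro conjI ballI allI impI)
  fix a b x assume "a \<in> nx`W" "b \<in> nx`W" "btw (fst a) x (fst b)"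
  then have "nx a \<in> W" "nx b \<in> W" "btw (fst (nx a)) (-x) (fst (nx b))" by auto
  from orthoX[OF assms this] obtain y where "btw (snd (nx a)) y (snd (nx b))" "(-x,y) \<in> W" by blast
  then show "\<exists>y. btw (snd a) y (snd b) \<and> (x,y) \<in> nx ` W" by auto
next
  fix a b y assume "a \<in> nx`W" "b \<in> nx`W" "btw (snd a) y (snd b)"
  then have "nx a \<in> W" "nx b \<in> W" "btw (snd (nx a)) y (snd (nx b))" by auto
  from orthoY[OF assms this] obtain x where x: "btw (fst (nx a)) x (fst (nx b))" "(x,y) \<in> W" by blast
  have "btw (fst a) (-x) (fst b)" using x(1) btw_neg[of "fst a" "-x" "fst b"] by simp
  then show "\<exists>x. btw (fst a) x (fst b) \<and> (x,y) \<in> nx ` W" using x(2) by (intro exI[of _ "-x"]) auto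
qed

lemma ortho_ny: assumes "ortho W" shows "ortho (ny ` W)"
  unfolding ortho_def
proof (intro conjI ballI allI impI)
  fix a b y assume "a \<in> ny`W" "b \<in> ny`W" "btw (snd a) y (snd b)"
  then have "ny a \<in> W" "ny b \<in> W" "btw (snd (ny a)) (-y) (snd (ny b))" by auto
  from orthoY[OF assms this] obtain x where "btw (fst (ny a)) x (fst (ny b))" "(x,-y) \<in> W" by blast
  then show "\<exists>x. btw (fst a) x (fst b) \<and> (x,y) \<in> ny ` W" by auto
next
  fix a b x assume "a \<in> ny`W" "b \<in> ny`W" "btw (fst a) x (fst b)"
  then have "ny a \<in> W" "ny b \<in> W" "btw (fst (ny a)) x (fst (ny b))" by auto
  from orthoX[OF assms this] obtain y where y: "btw (snd (ny a)) y (snd (ny b))" "(x,y) \<in> W" by blast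
  have "btw (snd a) (-y) (snd b)" using y(1) btw_neg[of "snd a" "-y" "snd b"] by simp
  then show "\<exists>y. btw (snd a) y (snd b) \<and> (x,y) \<in> ny ` W" using y(2) by (intro exI[of _ "-y"]) auto
qed

lemma inn_sw[simp]: "inn (sw ` W) z \<longleftrightarrow> inn W (sw z)"
proof
  assume "inn (sw ` W) z"
  then obtain r where r: "r>0" "\<And>x y. \<bar>x - fst z\<bar> < r \<Longrightarrow> \<bar>y - snd z\<bar> < r \<Longrightarrow> (x, y) \<in> sw ` W"
    unfolding inn_def by blast
  show "inn W (sw z)" unfolding inn_def
    by (rule exI[of _ r]) (use r in \<open>auto dest!: r(2)\<close>)
next
  assume "inn W (sw z)"
  then obtain r where r: "r>0" "\<And>x y. \<bar>x - snd z\<bar> < r \<Longrightarrow> \<bar>y - fst z\<bar> < r \<Longrightarrow> (x, y) \<in> W"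
    unfolding inn_def by auto
  show "inn (sw ` W) z" unfolding inn_def
    by (rule exI[of _ r]) (use r in \<open>auto dest!: r(2)\<close>)
qed

lemma inn_nx[simp]: "inn (nx ` W) z \<longleftrightarrow> inn W (nx z)"
proof
  assume "inn (nx ` W) z"
  then obtain r where r: "r>0" "\<And>x y. \<bar>x - fst z\<bar> < r \<Longrightarrow> \<bar>y - snd z\<bar> < r \<Longrightarrow> (x, y) \<in> nx ` W"
    unfolding inn_def by blast
  show "inn W (nx z)" unfolding inn_def
  proof (rule exI[of _ r], intro conjI allI impI)
    fix x y assume "\<bar>x - fst (nx z)\<bar> < r" "\<bar>y - snd (nx z)\<bar> < r"
    then have "\<bar>-x - fst z\<bar> < r" "\<bar>y - snd z\<bar> < r" by auto
    from r(2)[OF this] show "(x,y) \<in> W" by simp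
  qed (use r in auto)
next
  assume "inn W (nx z)"
  then obtain r where r: "r>0" "\<And>x y. \<bar>x - fst (nx z)\<bar> < r \<Longrightarrow> \<bar>y - snd (nx z)\<bar> < r \<Longrightarrow> (x, y) \<in> W"
    unfolding inn_def by blast
  show "inn (nx ` W) z" unfolding inn_def
  proof (rule exI[of _ r], intro conjI allI impI)
    fix x y assume "\<bar>x - fst z\<bar> < r" "\<bar>y - snd z\<bar> < r"
    then have "\<bar>-x - fst (nx z)\<bar> < r" "\<bar>y - snd (nx z)\<bar> < r" by auto
    from r(2)[OF this] show "(x,y) \<in> nx ` W" by simp
  qed (use r in auto)
qed

lemma inn_ny[simp]: "inn (ny ` W) z \<longleftrightarrow> inn W (ny z)"
proof
  assume "inn (ny ` W) z"
  then obtain r where r: "r>0" "\<And>x y. \<bar>x - fst z\<bar> < r \<Longrightarrow> \<bar>y - snd z\<bar> < r \<Longrightarrow> (x, y) \<in> ny ` W"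
    unfolding inn_def by blast
  show "inn W (ny z)" unfolding inn_def
  proof (rule exI[of _ r], intro conjI allI impI)
    fix x y assume "\<bar>x - fst (ny z)\<bar> < r" "\<bar>y - snd (ny z)\<bar> < r"
    then have "\<bar>x - fst z\<bar> < r" "\<bar>-y - snd z\<bar> < r" by auto
    from r(2)[OF this] show "(x,y) \<in> W" by simp
  qed (use r in auto)
next
  assume "inn W (ny z)"
  then obtain r where r: "r>0" "\<And>x y. \<bar>x - fst (ny z)\<bar> < r \<Longrightarrow> \<bar>y - snd (ny z)\<bar> < r \<Longrightarrow> (x, y) \<in> W"
    unfolding inn_def by blast
  show "inn (ny ` W) z" unfolding inn_def
  proof (rule exI[of _ r], intro conjI allI impI)
    fix x y assume "\<bar>x - fst z\<bar> < r" "\<bar>y - snd z\<bar> < r"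
    then have "\<bar>x - fst (ny z)\<bar> < r" "\<bar>-y - snd (ny z)\<bar> < r" by auto
    from r(2)[OF this] show "(x,y) \<in> ny ` W" by simp
  qed (use r in auto)
qed


lemma claim_above:
  assumes "ortho W" "inn W u" "fst u = fst t" "snd t < snd u" "\<not> inn W t"
  shows "(\<forall>a\<in>W. \<not> (fst a < fst t \<and> snd a < snd t)) \<or> (\<forall>b\<in>W. \<not> (fst t < fst b \<and> snd b < snd t))"
  using claim_base[OF ortho_ny[OF assms(1)], of "ny u" "ny t"] assms by auto

lemma claim_left:
  assumes "ortho W" "inn W u" "snd u = snd t" "fst u < fst t" "\<not> inn W t"
  shows "(\<forall>a\<in>W. \<not> (fst t < fst a \<and> snd t < snd a)) \<or> (\<forall>b\<in>W. \<not> (fst t < fst b \<and> snd b < snd t))"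
  using claim_base[OF ortho_sw[OF assms(1)], of "sw u" "sw t"] assms by auto

lemma claim_right:
  assumes "ortho W" "inn W u" "snd u = snd t" "fst t < fst u" "\<not> inn W t"
  shows "(\<forall>a\<in>W. \<not> (fst a < fst t \<and> snd t < snd a)) \<or> (\<forall>b\<in>W. \<not> (fst b < fst t \<and> snd b < snd t))"
  using claim_left[OF ortho_nx[OF assms(1)], of "nx u" "nx t"] assms by auto

lemma open_fst_lt: "open {z::pt. fst z < a}"
proof -
  have "{z::pt. fst z < a} = fst -` {..<a}" by auto
  then show ?thesis by (simp add: open_vimage_fst)
qed
lemma open_fst_gt: "open {z::pt. a < fst z}"
proof -
  have "{z::pt. a < fst z} = fst -` {a<..}" by auto
  then show ?thesis by (simp add: open_vimage_fst)
qed
lemma open_snd_lt: "open {z::pt. snd z < a}"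
proof -
  have "{z::pt. snd z < a} = snd -` {..<a}" by auto
  then show ?thesis by (simp add: open_vimage_snd)
qed
lemma open_snd_gt: "open {z::pt. a < snd z}"
proof -
  have "{z::pt. a < snd z} = snd -` {a<..}" by auto
  then show ?thesis by (simp add: open_vimage_snd)
qed
lemma open_cond: "open {z. P z} \<Longrightarrow> open {z. c \<and> P z}"
  by (cases c) auto
lemma open_cond2: "open {z::pt. fst z < a \<and> b < snd z}"
proof -
  have "{z::pt. fst z < a \<and> b < snd z} = {z. fst z < a} \<inter> {z. b < snd z}" by auto
  then show ?thesis using open_fst_lt open_snd_gt by auto
qed

definition cfg :: "pt set \<Rightarrow> pt set \<Rightarrow> bool" where
  "cfg W S \<longleftrightarrow> ortho W \<and> S \<subseteq> W \<and> connected S \<and>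
     (\<exists>s\<in>S. \<forall>t\<in>W. fst s \<le> fst t) \<and> (\<exists>s\<in>S. \<forall>t\<in>W. fst t \<le> fst s) \<and>
     (\<exists>s\<in>S. \<forall>t\<in>W. snd s \<le> snd t) \<and> (\<exists>s\<in>S. \<forall>t\<in>W. snd t \<le> snd s)"

lemma cont_sw: "continuous_on A sw" unfolding sw_def by (intro continuous_intros)
lemma cont_nx: "continuous_on A nx" unfolding nx_def by (intro continuous_intros)
lemma cont_ny: "continuous_on A ny" unfolding ny_def by (intro continuous_intros)

lemma cfg_sw: "cfg W S \<Longrightarrow> cfg (sw ` W) (sw ` S)"
  unfolding cfg_def using ortho_sw connected_continuous_image[OF cont_sw]
  by (auto simp: image_subset_iff subset_iff)
lemma cfg_nx: "cfg W S \<Longrightarrow> cfg (nx ` W) (nx ` S)"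
  unfolding cfg_def using ortho_nx connected_continuous_image[OF cont_nx]
  by (auto simp: image_subset_iff subset_iff)
lemma cfg_ny: "cfg W S \<Longrightarrow> cfg (ny ` W) (ny ` S)"
  unfolding cfg_def using ortho_ny connected_continuous_image[OF cont_ny]
  by (auto simp: image_subset_iff subset_iff)

lemma inn_below: assumes "inn W u" shows "\<exists>z\<in>W. snd z < snd u"
proof -
  obtain r where r: "r>0" "\<And>x y. \<bar>x - fst u\<bar> < r \<Longrightarrow> \<bar>y - snd u\<bar> < r \<Longrightarrow> (x, y) \<in> W"
    using assms unfolding inn_def by blast
  show ?thesis by (rule bexI[of _ "(fst u, snd u - r/2)"]) (use r in auto)
qed

lemma inn_above: assumes "inn W u" shows "\<exists>z\<in>W. fst z = fst u \<and> snd u < snd z"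
proof -
  obtain r where r: "r>0" "\<And>x y. \<bar>x - fst u\<bar> < r \<Longrightarrow> \<bar>y - snd u\<bar> < r \<Longrightarrow> (x, y) \<in> W"
    using assms unfolding inn_def by blast
  show ?thesis by (rule bexI[of _ "(fst u, snd u + r/2)"]) (use r in auto)
qed

lemma inn_mem: assumes "inn W u" shows "u \<in> W"
proof -
  obtain r where r: "r>0" "\<And>x y. \<bar>x - fst u\<bar> < r \<Longrightarrow> \<bar>y - snd u\<bar> < r \<Longrightarrow> (x, y) \<in> W"
    using assms unfolding inn_def by blast
  show ?thesis using r(2)[of "fst u" "snd u"] r(1) by auto
qed

lemma cross_h:
  assumes st: "cfg W S" and ab: "a < b" and nP: "\<not> inn W (a,h)" and nC: "\<not> inn W (b,h)"
    and u: "inn W u" "snd u = h" "btw a (fst u) b"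
  shows "S \<inter> closed_segment (a,h) (b,h) \<noteq> {}"
proof
  assume dis: "S \<inter> closed_segment (a,h) (b,h) = {}"
  have o: "ortho W" and SW: "S \<subseteq> W" and cS: "connected S" using st by (auto simp: cfg_def)
  obtain sB where sB: "sB \<in> S" "\<And>t. t \<in> W \<Longrightarrow> snd sB \<le> snd t" using st unfolding cfg_def by blast
  obtain sT where sT: "sT \<in> S" "\<And>t. t \<in> W \<Longrightarrow> snd t \<le> snd sT" using st unfolding cfg_def by blast
  have sBh: "snd sB < h" using inn_below[OF u(1)] sB u(2) by force
  have sTh: "h < snd sT" using inn_above[OF u(1)] sT u(2) by force
  have "fst u \<noteq> a" using nP u by (metis prod.collapse)
  moreover have "fst u \<noteq> b" using nC u by (metis prod.collapse)
  ultimately have u1: "a < fst u" "fst u < b" using u(3) ab by (auto simp: btw_def)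
  have P: "(\<forall>z\<in>W. \<not> (fst z < a \<and> h < snd z)) \<or> (\<forall>z\<in>W. \<not> (fst z < a \<and> snd z < h))"
    using claim_right[OF o u(1), of "(a,h)"] u nP u1 by auto
  have C: "(\<forall>z\<in>W. \<not> (b < fst z \<and> h < snd z)) \<or> (\<forall>z\<in>W. \<not> (b < fst z \<and> snd z < h))"
    using claim_left[OF o u(1), of "(b,h)"] u nC u1 by auto
  define \<alpha> where "\<alpha> = (\<forall>z\<in>W. \<not> (fst z < a \<and> snd z < h))"
  define \<beta> where "\<beta> = (\<forall>z\<in>W. \<not> (b < fst z \<and> snd z < h))"
  define O1 where "O1 = {z::pt. h < snd z} \<union> {z. \<alpha> \<and> fst z < a} \<union> {z. \<beta> \<and> b < fst z}"
  define O2 where "O2 = {z::pt. snd z < h} \<union> {z. \<not>\<alpha> \<and> fst z < a} \<union> {z. \<not>\<beta> \<and> b < fst z}"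
  have "open O1" unfolding O1_def
    by (intro open_Un open_cond open_fst_lt open_fst_gt open_snd_gt)
  moreover have "open O2" unfolding O2_def
    by (intro open_Un open_cond open_fst_lt open_fst_gt open_snd_lt)
  moreover have "O1 \<inter> O2 \<inter> S = {}"
  proof (rule ccontr)
    assume "O1 \<inter> O2 \<inter> S \<noteq> {}"
    then obtain z where z: "z \<in> O1" "z \<in> O2" "z \<in> W" using SW by blast
    show False using z P C ab unfolding O1_def O2_def \<alpha>_def \<beta>_def by auto
  qed
  moreover have "S \<subseteq> O1 \<union> O2"
  proof
    fix z assume "z \<in> S"
    then have "z \<notin> closed_segment (a,h) (b,h)" using dis by blast
    then show "z \<in> O1 \<union> O2" unfolding seg_h O1_def O2_def btw_def by auto
  qed
  ultimately have "O1 \<inter> S = {} \<or> O2 \<inter> S = {}" using connectedD[OF cS] by blast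
  moreover have "sT \<in> O1" using sTh by (simp add: O1_def)
  moreover have "sB \<in> O2" using sBh by (simp add: O2_def)
  ultimately show False using sB sT by blast
qed

lemma seg_sw: "sw ` closed_segment a b = closed_segment (sw a) (sw b)"
proof -
  have "linear sw" by (rule linearI) (auto simp: sw_def algebra_simps)
  then show ?thesis by (simp add: closed_segment_linear_image)
qed
lemma seg_nx: "nx ` closed_segment a b = closed_segment (nx a) (nx b)"
proof -
  have "linear nx" by (rule linearI) (auto simp: nx_def algebra_simps)
  then show ?thesis by (simp add: closed_segment_linear_image)
qed
lemma seg_ny: "ny ` closed_segment a b = closed_segment (ny a) (ny b)"
proof -
  have "linear ny" by (rule linearI) (auto simp: ny_def algebra_simps)
  then show ?thesis by (simp add: closed_segment_linear_image)
qed

lemma cross_v: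
  assumes st: "cfg W S" and ab: "a < b" and nP: "\<not> inn W (h,a)" and nC: "\<not> inn W (h,b)"
    and u: "inn W u" "fst u = h" "btw a (snd u) b"
  shows "S \<inter> closed_segment (h,a) (h,b) \<noteq> {}"
proof -
  have "sw ` S \<inter> closed_segment (a,h) (b,h) \<noteq> {}"
    by (rule cross_h[OF cfg_sw[OF st] ab, where u="sw u"]) (use assms in auto)
  moreover have "closed_segment (a,h) (b,h) = sw ` closed_segment (h,a) (h,b)" by (simp add: seg_sw)
  ultimately show ?thesis by auto
qed


definition LA :: "pt \<Rightarrow> pt \<Rightarrow> pt set" where
  "LA p q = closed_segment p (fst q, snd p) \<union> closed_segment (fst q, snd p) q"
definition LB :: "pt \<Rightarrow> pt \<Rightarrow> pt set" where
  "LB p q = closed_segment p (fst p, snd q) \<union> closed_segment (fst p, snd q) q"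

lemma mainA:
  assumes st: "cfg W S" and lt: "px < qx" "py < qy"
    and np: "\<not> inn W (px,py)" and nq: "\<not> inn W (qx,qy)"
    and zA: "\<exists>z\<in>LA (px,py) (qx,qy). inn W z" and zB: "\<exists>z\<in>LB (px,py) (qx,qy). inn W z"
  shows "S \<inter> LA (px,py) (qx,qy) \<noteq> {}"
proof
  assume dis: "S \<inter> LA (px,py) (qx,qy) = {}"
  have LAe: "LA (px,py) (qx,qy) = closed_segment (px,py) (qx,py) \<union> closed_segment (qx,py) (qx,qy)"
    by (simp add: LA_def)
  have LBe: "LB (px,py) (qx,qy) = closed_segment (px,py) (px,qy) \<union> closed_segment (px,qy) (qx,qy)"
    by (simp add: LB_def)
  have o: "ortho W" and SW: "S \<subseteq> W" and cS: "connected S" using st by (auto simp: cfg_def)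
  obtain sB where sB: "sB \<in> S" "\<And>t. t \<in> W \<Longrightarrow> snd sB \<le> snd t" using st unfolding cfg_def by blast
  obtain sT where sT: "sT \<in> S" "\<And>t. t \<in> W \<Longrightarrow> snd t \<le> snd sT" using st unfolding cfg_def by blast
  show False
  proof (cases "inn W (qx,py)")
    case False
    from zA obtain z where z: "z \<in> LA (px,py) (qx,qy)" "inn W z" by blast
    show False
    proof (cases "z \<in> closed_segment (px,py) (qx,py)")
      case True
      then have "S \<inter> closed_segment (px,py) (qx,py) \<noteq> {}"
        using cross_h[OF st lt(1) np False z(2)] by (auto simp: seg_h)
      then show False using dis LAe by blast
    next
      case False
      then have "z \<in> closed_segment (qx,py) (qx,qy)" using z LAe by blast
      then have "S \<inter> closed_segment (qx,py) (qx,qy) \<noteq> {}"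
        using cross_v[OF st lt(2) \<open>\<not> inn W (qx,py)\<close> nq z(2)] by (auto simp: seg_v)
      then show False using dis LAe by blast
    qed
  next
    case cin: True
    have P: "(\<forall>z\<in>W. \<not> (fst z < px \<and> py < snd z)) \<or> (\<forall>z\<in>W. \<not> (fst z < px \<and> snd z < py))"
      using claim_right[OF o cin, of "(px,py)"] np lt by auto
    have Q: "(\<forall>z\<in>W. \<not> (fst z < qx \<and> qy < snd z)) \<or> (\<forall>z\<in>W. \<not> (qx < fst z \<and> qy < snd z))"
      using claim_base[OF o cin, of "(qx,qy)"] nq lt by auto
    define \<alpha> where "\<alpha> = (\<forall>z\<in>W. \<not> (fst z < px \<and> snd z < py))"
    define \<beta> where "\<beta> = (\<forall>z\<in>W. \<not> (qx < fst z \<and> qy < snd z))"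
    define O1 where "O1 = {z::pt. fst z < qx \<and> py < snd z} \<union> {z. \<alpha> \<and> fst z < px} \<union> {z. \<beta> \<and> qy < snd z}"
    define O2 where "O2 = {z::pt. qx < fst z} \<union> {z. snd z < py} \<union> {z. \<not>\<alpha> \<and> fst z < px} \<union> {z. \<not>\<beta> \<and> qy < snd z}"
    have "open O1" unfolding O1_def
      by (intro open_Un open_cond open_fst_lt open_fst_gt open_snd_gt open_cond2)
    moreover have "open O2" unfolding O2_def
      by (intro open_Un open_cond open_fst_lt open_fst_gt open_snd_lt open_snd_gt)
    moreover have "O1 \<inter> O2 \<inter> S = {}"
    proof (rule ccontr)
      assume "O1 \<inter> O2 \<inter> S \<noteq> {}"
      then obtain z where z: "z \<in> O1" "z \<in> O2" "z \<in> W" using SW by blast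
      show False using z P Q lt unfolding O1_def O2_def \<alpha>_def \<beta>_def by auto
    qed
    moreover have "S \<subseteq> O1 \<union> O2"
    proof
      fix z assume "z \<in> S"
      then have "z \<notin> LA (px,py) (qx,qy)" using dis by blast
      then show "z \<in> O1 \<union> O2" unfolding LAe seg_h seg_v O1_def O2_def btw_def using lt by auto
    qed
    ultimately have cc: "O1 \<inter> S = {} \<or> O2 \<inter> S = {}" using connectedD[OF cS] by blast
    have "sB \<in> O2" using inn_below[OF cin] sB by (force simp: O2_def)
    moreover have "O1 \<inter> S \<noteq> {}"
    proof (cases "inn W (px,qy)")
      case True
      obtain z where z: "z \<in> W" "fst z = px" "qy < snd z" using inn_above[OF True] by auto
      then have \<beta> using Q lt by (auto simp: \<beta>_def)
      have "qy < snd sT" using sT(2)[OF z(1)] z by simp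
      then have "sT \<in> O1" using \<open>\<beta>\<close> by (simp add: O1_def)
      then show ?thesis using sT by blast
    next
      case dn: False
      from zB obtain w where w: "w \<in> LB (px,py) (qx,qy)" "inn W w" by blast
      show ?thesis
      proof (cases "w \<in> closed_segment (px,py) (px,qy)")
        case True
        then obtain v where v: "v \<in> S" "v \<in> closed_segment (px,py) (px,qy)"
          using cross_v[OF st lt(2) np dn w(2)] by (auto simp: seg_v)
        have "v \<noteq> (px,py)" using v dis by (auto simp: LAe)
        then have "v \<in> O1" using v(2) lt by (auto simp: seg_v btw_def O1_def prod_eq_iff)
        then show ?thesis using v by blast
      next
        case False
        then have "w \<in> closed_segment (px,qy) (qx,qy)" using w LBe by blast
        then obtain v where v: "v \<in> S" "v \<in> closed_segment (px,qy) (qx,qy)"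
          using cross_h[OF st lt(1) dn nq w(2)] by (auto simp: seg_h)
        have "v \<noteq> (qx,qy)" using v dis by (auto simp: LAe)
        then have "v \<in> O1" using v(2) lt by (auto simp: seg_h btw_def O1_def prod_eq_iff)
        then show ?thesis using v by blast
      qed
    qed
    ultimately show False using cc sB by blast
  qed
qed


lemma LA_sw: "sw ` LA p q = LB (sw p) (sw q)" and LB_sw: "sw ` LB p q = LA (sw p) (sw q)"
  by (auto simp only: LA_def LB_def image_Un seg_sw sw_simps)
lemma LA_ny: "ny ` LA p q = LA (ny p) (ny q)" and LB_ny: "ny ` LB p q = LB (ny p) (ny q)"
  by (auto simp only: LA_def LB_def image_Un seg_ny ny_simps)
lemma LA_rev: "LA p q = LB q p"
  by (auto simp: LA_def LB_def closed_segment_commute)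

lemma img_int_sw: "sw ` S \<inter> sw ` X \<noteq> {} \<longleftrightarrow> S \<inter> X \<noteq> {}"
proof
  assume "sw ` S \<inter> sw ` X \<noteq> {}"
  then obtain z where "z \<in> sw ` S" "z \<in> sw ` X" by blast
  then have "sw z \<in> S \<inter> X" by simp
  then show "S \<inter> X \<noteq> {}" by blast
next
  assume "S \<inter> X \<noteq> {}"
  then obtain z where "z \<in> S" "z \<in> X" by blast
  then have "sw z \<in> sw ` S \<inter> sw ` X" by simp
  then show "sw ` S \<inter> sw ` X \<noteq> {}" by blast
qed
lemma img_int_ny: "ny ` S \<inter> ny ` X \<noteq> {} \<longleftrightarrow> S \<inter> X \<noteq> {}"
proof
  assume "ny ` S \<inter> ny ` X \<noteq> {}"
  then obtain z where "z \<in> ny ` S" "z \<in> ny ` X" by blast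
  then have "ny z \<in> S \<inter> X" by simp
  then show "S \<inter> X \<noteq> {}" by blast
next
  assume "S \<inter> X \<noteq> {}"
  then obtain z where "z \<in> S" "z \<in> X" by blast
  then have "ny z \<in> ny ` S \<inter> ny ` X" by simp
  then show "ny ` S \<inter> ny ` X \<noteq> {}" by blast
qed
lemma bex_inn_sw: "(\<exists>z\<in>sw ` X. inn (sw ` W) z) \<longleftrightarrow> (\<exists>z\<in>X. inn W z)" by simp
lemma bex_inn_ny: "(\<exists>z\<in>ny ` X. inn (ny ` W) z) \<longleftrightarrow> (\<exists>z\<in>X. inn W z)" by simp

lemma main_pos:
  assumes st: "cfg W S" and lt: "fst p < fst q" "snd p < snd q"
    and np: "\<not> inn W p" and nq: "\<not> inn W q"
    and zA: "\<exists>z\<in>LA p q. inn W z" and zB: "\<exists>z\<in>LB p q. inn W z"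
  shows "S \<inter> LA p q \<noteq> {} \<and> S \<inter> LB p q \<noteq> {}"
proof
  show "S \<inter> LA p q \<noteq> {}"
    using mainA[OF st lt, of ] np nq zA zB by (metis prod.collapse)
next
  have "sw ` S \<inter> LA (sw p) (sw q) \<noteq> {}"
  proof -
    have A: "\<exists>z\<in>LA (sw p) (sw q). inn (sw ` W) z" using zB bex_inn_sw[of "LB p q" W] by (simp only: LB_sw)
    have B: "\<exists>z\<in>LB (sw p) (sw q). inn (sw ` W) z" using zA bex_inn_sw[of "LA p q" W] by (simp only: LA_sw)
    show ?thesis
      using mainA[OF cfg_sw[OF st], of "snd p" "snd q" "fst p" "fst q"] lt np nq A B by (metis prod.collapse sw_def inn_sw sw_simps(3))
  qed
  then have "sw ` S \<inter> sw ` LB p q \<noteq> {}" by (metis LB_sw)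
  then show "S \<inter> LB p q \<noteq> {}" using img_int_sw by blast
qed

lemma main_lt:
  assumes st: "cfg W S" and lt: "fst p < fst q" "snd p \<noteq> snd q"
    and np: "\<not> inn W p" and nq: "\<not> inn W q"
    and zA: "\<exists>z\<in>LA p q. inn W z" and zB: "\<exists>z\<in>LB p q. inn W z"
  shows "S \<inter> LA p q \<noteq> {} \<and> S \<inter> LB p q \<noteq> {}"
proof (cases "snd p < snd q")
  case True
  then show ?thesis using main_pos[OF st lt(1) True np nq zA zB] by blast
next
  case False
  then have lt2: "fst (ny p) < fst (ny q)" "snd (ny p) < snd (ny q)" using lt by auto
  have A: "\<exists>z\<in>LA (ny p) (ny q). inn (ny ` W) z" using zA bex_inn_ny[of "LA p q" W] by (simp only: LA_ny)
  have B: "\<exists>z\<in>LB (ny p) (ny q). inn (ny ` W) z" using zB bex_inn_ny[of "LB p q" W] by (simp only: LB_ny)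
  have "ny ` S \<inter> LA (ny p) (ny q) \<noteq> {} \<and> ny ` S \<inter> LB (ny p) (ny q) \<noteq> {}"
    by (rule main_pos[OF cfg_ny[OF st] lt2 _ _ A B]) (use np nq in auto)
  then have "ny ` S \<inter> ny ` LA p q \<noteq> {} \<and> ny ` S \<inter> ny ` LB p q \<noteq> {}" by (metis LA_ny LB_ny)
  then show ?thesis using img_int_ny by blast
qed

lemma final_abs:
  assumes st: "cfg W S"
    and np: "\<not> inn W p" and nq: "\<not> inn W q"
    and zA: "\<exists>z\<in>LA p q. inn W z" and zB: "\<exists>z\<in>LB p q. inn W z"
  shows "S \<inter> LA p q \<noteq> {} \<and> S \<inter> LB p q \<noteq> {}"
proof -
  obtain px py qx qy where pq: "p = (px,py)" "q = (qx,qy)" by (cases p, cases q)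
  consider "px < qx" "py \<noteq> qy" | "qx < px" "py \<noteq> qy" | "px = qx" | "py = qy" by linarith
  then show ?thesis
  proof cases
    case 1 then show ?thesis using main_lt[OF st _ _ np nq zA zB] pq by auto
  next
    case 2
    have "S \<inter> LA q p \<noteq> {} \<and> S \<inter> LB q p \<noteq> {}"
      by (rule main_lt[OF st _ _ nq np]) (use 2 pq zA zB LA_rev[of p q] LA_rev[of q p] in auto)
    then show ?thesis using LA_rev[of p q] LA_rev[of q p] by auto
  next
    case 3
    then have e: "LA p q = closed_segment p q" "LB p q = closed_segment p q"
      using pq by (auto simp: LA_def LB_def)
    have "py \<noteq> qy" using 3 pq np zA e by auto
    have "S \<inter> closed_segment p q \<noteq> {}"
    proof (cases "py < qy")
      case True
      then show ?thesis using cross_v[OF st True, of px] np nq zA 3 pq e by (auto simp: seg_v)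
    next
      case False
      then have "qy < py" using \<open>py \<noteq> qy\<close> by auto
      obtain z where z: "z \<in> closed_segment p q" "inn W z" using zA e by auto
      have "S \<inter> closed_segment (px,qy) (px,py) \<noteq> {}"
        by (rule cross_v[OF st \<open>qy < py\<close> _ _ z(2)]) (use np nq 3 pq z in \<open>auto simp: seg_v btw_def\<close>)
      then show ?thesis using pq 3 by (simp add: closed_segment_commute)
    qed
    then show ?thesis using e by simp
  next
    case 4
    then have e: "LA p q = closed_segment p q" "LB p q = closed_segment p q"
      using pq by (auto simp: LA_def LB_def)
    have "px \<noteq> qx" using 4 pq np zA e by auto
    have "S \<inter> closed_segment p q \<noteq> {}"
    proof (cases "px < qx")
      case True
      then show ?thesis using cross_h[OF st True, of py] np nq zA 4 pq e by (auto simp: seg_h)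
    next
      case False
      then have "qx < px" using \<open>px \<noteq> qx\<close> by auto
      obtain z where z: "z \<in> closed_segment p q" "inn W z" using zA e by auto
      have "S \<inter> closed_segment (qx,py) (px,py) \<noteq> {}"
        by (rule cross_h[OF st \<open>qx < px\<close> _ _ z(2)]) (use np nq 4 pq z in \<open>auto simp: seg_h btw_def\<close>)
      then show ?thesis using pq 4 by (simp add: closed_segment_commute)
    qed
    then show ?thesis using e by simp
  qed
qed


lemma path_len_Nil: "path_len [] = 0" and path_len_single: "path_len [a] = 0"
  by (auto simp: path_len_def)

lemma path_len_Cons2: "path_len (a # b # r) = l1_dist a b + path_len (b # r)"
  unfolding path_len_def length_Cons diff_Suc_1 sum.lessThan_Suc_shift by simp

lemma path_set_single: "path_set [a] = {a}"
  by (auto simp: path_set_def)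

lemma path_set_Cons2: "path_set (a # b # r) = closed_segment a b \<union> path_set (b # r)"
proof -
  have "(\<Union>i<length (a # b # r) - 1. closed_segment ((a # b # r) ! i) ((a # b # r) ! Suc i))
      = closed_segment a b \<union> (\<Union>i<length (b # r) - 1. closed_segment ((b # r) ! i) ((b # r) ! Suc i))"
    by (simp add: lessThan_Suc_eq_insert_0 UN_insert image_iff)
  then show ?thesis unfolding path_set_def by auto
qed

lemma rect_path_single: "rect_path [a]" by (simp add: rect_path_def)

lemma rect_path_Cons2: "rect_path (a # b # r) \<longleftrightarrow> (fst a = fst b \<or> snd a = snd b) \<and> rect_path (b # r)"
  unfolding rect_path_def length_Cons diff_Suc_1 All_less_Suc2 by simp

lemma setcomp_Suc: "{f i |i. i < Suc n \<and> P i} = (if P 0 then {f 0} else {}) \<union> {f (Suc i) |i. i < n \<and> P (Suc i)}"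
  by (auto simp: less_Suc_eq_0_disj)

lemma horiz_segs_single: "horiz_segs [a] = {}" by (simp add: horiz_segs_def)
lemma vert_segs_single: "vert_segs [a] = {}" by (simp add: vert_segs_def)

lemma horiz_segs_Cons2: "horiz_segs (a # b # r) =
   (if snd a = snd b \<and> fst a \<noteq> fst b then {closed_segment a b} else {}) \<union> horiz_segs (b # r)"
  unfolding horiz_segs_def length_Cons diff_Suc_1 setcomp_Suc by (simp del: closed_segment_eq)

lemma vert_segs_Cons2: "vert_segs (a # b # r) =
   (if fst a = fst b \<and> snd a \<noteq> snd b then {closed_segment a b} else {}) \<union> vert_segs (b # r)"
  unfolding vert_segs_def length_Cons diff_Suc_1 setcomp_Suc by (simp del: closed_segment_eq)


lemma lin_aux1: "(c1::real) \<le> a1 + b1 \<Longrightarrow> c2 \<le> a2 + b2 \<Longrightarrow> c1 + c2 \<le> (a1 + a2) + (b1 + b2)"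
  by linarith
lemma lin_aux2: "(a1::real) + a2 + (b1 + b2) = c1 + c2 \<Longrightarrow> c1 \<le> a1 + b1 \<Longrightarrow> c2 \<le> a2 + b2 \<Longrightarrow> a1 + b1 = c1 \<and> a2 + b2 = c2"
  by linarith

lemma l1_tri: "l1_dist a c \<le> l1_dist a b + l1_dist b c"
  unfolding l1_dist_def
  by (rule lin_aux1) (use abs_triangle_ineq[of "fst a - fst b" "fst b - fst c"] abs_triangle_ineq[of "snd a - snd b" "snd b - snd c"] in simp_all)

lemma abs_btw: "\<bar>x - y\<bar> + \<bar>y - z\<bar> = \<bar>x - z\<bar> \<Longrightarrow> btw x y (z::real)"
  by (auto simp: btw_def abs_if split: if_splits)

lemma l1_eq_btw: "l1_dist a b + l1_dist b c = l1_dist a c \<Longrightarrow> btw (fst a) (fst b) (fst c) \<and> btw (snd a) (snd b) (snd c)"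
proof -
  assume h: "l1_dist a b + l1_dist b c = l1_dist a c"
  have t1: "\<bar>fst a - fst c\<bar> \<le> \<bar>fst a - fst b\<bar> + \<bar>fst b - fst c\<bar>" using abs_triangle_ineq[of "fst a - fst b" "fst b - fst c"] by simp
  have t2: "\<bar>snd a - snd c\<bar> \<le> \<bar>snd a - snd b\<bar> + \<bar>snd b - snd c\<bar>" using abs_triangle_ineq[of "snd a - snd b" "snd b - snd c"] by simp
  have "\<bar>fst a - fst b\<bar> + \<bar>fst b - fst c\<bar> = \<bar>fst a - fst c\<bar>" "\<bar>snd a - snd b\<bar> + \<bar>snd b - snd c\<bar> = \<bar>snd a - snd c\<bar>"
    using lin_aux2[OF h[unfolded l1_dist_def] t1 t2] by simp_all
  then show ?thesis using abs_btw by blast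
qed

lemma l1_ge: "ps \<noteq> [] \<Longrightarrow> path_len ps \<ge> l1_dist (hd ps) (last ps)"
proof (induction ps rule: induct_list012)
  case 1 then show ?case by (simp add: path_len_Nil l1_dist_def)
next
  case (2 x) then show ?case by (simp add: path_len_single l1_dist_def)
next
  case (3 a b r)
  then show ?case using l1_tri[where a=a and b=b and c="last (b # r)"] by (simp add: path_len_Cons2)
qed

definition rbox :: "pt \<Rightarrow> pt \<Rightarrow> pt set" where
  "rbox a c = {z. btw (fst a) (fst z) (fst c) \<and> btw (snd a) (snd z) (snd c)}"

lemma conv_btw: "0 \<le> u \<Longrightarrow> u \<le> 1 \<Longrightarrow> btw x ((1 - u) * x + u * y) y"
proof -
  assume u: "0 \<le> u" "u \<le> 1"
  define d where "d = u * (y - x)"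
  have e: "(1 - u) * x + u * y = x + d" by (simp add: d_def algebra_simps)
  show ?thesis
  proof (cases "x \<le> y")
    case True
    then have "0 \<le> d" "d \<le> y - x" using u by (simp_all add: d_def mult_left_le_one_le)
    then show ?thesis unfolding e btw_def by simp
  next
    case False
    then have "d \<le> 0" "y - x \<le> d" using u by (simp_all add: d_def mult_nonneg_nonpos mult_left_le_one_le)
    then show ?thesis unfolding e btw_def by simp
  qed
qed

lemma seg_btw: "z \<in> closed_segment a b \<Longrightarrow> btw (fst a) (fst z) (fst b) \<and> btw (snd a) (snd z) (snd b)"
proof -
  assume "z \<in> closed_segment a b"
  then obtain u where u: "0 \<le> u" "u \<le> 1" "z = (1 - u) *\<^sub>R a + u *\<^sub>R b" by (auto simp: closed_segment_def)
  then show ?thesis using conv_btw[OF u(1,2)] by simp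
qed

lemma tight_split:
  assumes "path_len (a # b # r) = l1_dist a (last (b # r))"
  shows "path_len (b # r) = l1_dist b (last (b # r))" "l1_dist a b + l1_dist b (last (b # r)) = l1_dist a (last (b # r))"
  using assms l1_ge[of "b # r"] l1_tri[where a=a and b=b and c="last (b # r)"] by (auto simp: path_len_Cons2)

lemma btw_trans1: "btw a b c \<Longrightarrow> btw b z c \<Longrightarrow> btw a z c"
  unfolding btw_def by auto
lemma btw_trans2: "btw a b c \<Longrightarrow> btw a z b \<Longrightarrow> btw a z c"
  unfolding btw_def by auto

lemma tight_box: "path_len ps = l1_dist (hd ps) (last ps) \<Longrightarrow> ps \<noteq> [] \<Longrightarrow> path_set ps \<subseteq> rbox (hd ps) (last ps)"
proof (induction ps rule: induct_list012)
  case 1 then show ?case by blast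
next
  case (2 x) then show ?case by (simp add: path_set_single rbox_def btw_def)
next
  case (3 a b r)
  let ?q = "last (b # r)"
  have h3: "path_len (a # b # r) = l1_dist a ?q" using 3(3) by simp
  note t = tight_split[OF h3]
  have IH: "path_set (b # r) \<subseteq> rbox b ?q" using 3(2)[OF _ list.distinct(2)] t(1) by simp
  have bb: "btw (fst a) (fst b) (fst ?q) \<and> btw (snd a) (snd b) (snd ?q)" using l1_eq_btw[OF t(2)] .
  have "rbox b ?q \<subseteq> rbox a ?q"
  proof
    fix z assume "z \<in> rbox b ?q"
    then show "z \<in> rbox a ?q" using bb btw_trans1 unfolding rbox_def by blast
  qed
  moreover have "closed_segment a b \<subseteq> rbox a ?q"
  proof
    fix z assume "z \<in> closed_segment a b"
    then show "z \<in> rbox a ?q" using bb btw_trans2 seg_btw unfolding rbox_def by blast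
  qed
  ultimately show ?case using IH by (simp add: path_set_Cons2)
qed

lemma path_set_conn: "ps \<noteq> [] \<Longrightarrow> connected (path_set ps)"
proof (induction ps rule: induct_list012)
  case 1 then show ?case by simp
next
  case (2 x) then show ?case by (simp add: path_set_single)
next
  case (3 a b r)
  have "b \<in> path_set (b # r)" by (simp add: path_set_def)
  then have "closed_segment a b \<inter> path_set (b # r) \<noteq> {}" by auto
  then show ?case using 3(2) by (simp add: path_set_Cons2 connected_Un connected_segment)
qed

lemma set_path_set: "set ps \<subseteq> path_set ps" by (simp add: path_set_def)

definition cinv :: "pt list \<Rightarrow> bool" where
  "cinv ps \<longleftrightarrow> (let h = hd ps; q = last ps in
     h = q \<or>
     (fst h = fst q \<and> snd h \<noteq> snd q \<and> closed_segment h q \<subseteq> path_set ps \<and> h \<in> \<Union>(vert_segs ps)) \<or>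
     (snd h = snd q \<and> fst h \<noteq> fst q \<and> closed_segment h q \<subseteq> path_set ps \<and> h \<in> \<Union>(horiz_segs ps)) \<or>
     (fst h \<noteq> fst q \<and> snd h \<noteq> snd q \<and> LA h q \<subseteq> path_set ps \<and> h \<in> \<Union>(horiz_segs ps) \<and> (fst q, snd h) \<in> corner_points ps) \<or>
     (fst h \<noteq> fst q \<and> snd h \<noteq> snd q \<and> LB h q \<subseteq> path_set ps \<and> h \<in> \<Union>(vert_segs ps) \<and> (fst h, snd q) \<in> corner_points ps))"

lemma corner_mono: "corner_points (b # r) \<subseteq> corner_points (a # b # r)"
  unfolding corner_points_def by (auto simp: horiz_segs_Cons2 vert_segs_Cons2)


lemma mem_seg_h: "snd (a::pt) = snd b \<Longrightarrow> snd b = snd c \<Longrightarrow> btw (fst a) (fst b) (fst c) \<Longrightarrow> b \<in> closed_segment a c"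
  using seg_h[of "fst a" "snd a" "fst c"] by (metis (mono_tags, lifting) mem_Collect_eq prod.collapse)
lemma mem_seg_v: "fst (a::pt) = fst b \<Longrightarrow> fst b = fst c \<Longrightarrow> btw (snd a) (snd b) (snd c) \<Longrightarrow> b \<in> closed_segment a c"
  using seg_v[of "fst a" "snd a" "snd c"] by (metis (mono_tags, lifting) mem_Collect_eq prod.collapse)

lemma btw_same: "btw x y x \<Longrightarrow> y = x" unfolding btw_def by auto

lemma cinv_iff: "cinv ps \<longleftrightarrow>
     hd ps = last ps \<or>
     (fst (hd ps) = fst (last ps) \<and> snd (hd ps) \<noteq> snd (last ps) \<and> closed_segment (hd ps) (last ps) \<subseteq> path_set ps \<and> hd ps \<in> \<Union>(vert_segs ps)) \<or>
     (snd (hd ps) = snd (last ps) \<and> fst (hd ps) \<noteq> fst (last ps) \<and> closed_segment (hd ps) (last ps) \<subseteq> path_set ps \<and> hd ps \<in> \<Union>(horiz_segs ps)) \<or>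
     (fst (hd ps) \<noteq> fst (last ps) \<and> snd (hd ps) \<noteq> snd (last ps) \<and> LA (hd ps) (last ps) \<subseteq> path_set ps \<and> hd ps \<in> \<Union>(horiz_segs ps) \<and> (fst (last ps), snd (hd ps)) \<in> corner_points ps) \<or>
     (fst (hd ps) \<noteq> fst (last ps) \<and> snd (hd ps) \<noteq> snd (last ps) \<and> LB (hd ps) (last ps) \<subseteq> path_set ps \<and> hd ps \<in> \<Union>(vert_segs ps) \<and> (fst (hd ps), snd (last ps)) \<in> corner_points ps)"
  unfolding cinv_def Let_def by simp

lemma d1: "A \<Longrightarrow> A \<or> B \<or> C \<or> D \<or> E" by simp
lemma d2: "B \<Longrightarrow> A \<or> B \<or> C \<or> D \<or> E" by simp
lemma d3: "C \<Longrightarrow> A \<or> B \<or> C \<or> D \<or> E" by simp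
lemma d4: "D \<Longrightarrow> A \<or> B \<or> C \<or> D \<or> E" by simp
lemma d5: "E \<Longrightarrow> A \<or> B \<or> C \<or> D \<or> E" by simp

lemma corner_struct:
  "rect_path ps \<Longrightarrow> path_len ps = l1_dist (hd ps) (last ps) \<Longrightarrow> corner_points ps \<subseteq> {c} \<Longrightarrow> cinv ps"
proof (induction ps rule: induct_list012)
  case 1 then show ?case by (simp add: rect_path_def)
next
  case (2 x) then show ?case by (simp add: cinv_def)
next
  case (3 a b r)
  define q where "q = last (b # r)"
  have lastq: "last (a # b # r) = q" by (simp add: q_def)
  have rect: "fst a = fst b \<or> snd a = snd b" "rect_path (b # r)" using 3(3) by (simp_all add: rect_path_Cons2)
  have h3: "path_len (a # b # r) = l1_dist a (last (b # r))" using 3(4) lastq q_def by simp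
  note t = tight_split[OF h3, folded q_def]
  have CPsub: "corner_points (b # r) \<subseteq> corner_points (a # b # r)" by (rule corner_mono)
  have cpc: "corner_points (a # b # r) \<subseteq> {c}" using 3(5) .
  have IH: "cinv (b # r)" using 3(2)[OF rect(2)] t(1) CPsub cpc unfolding q_def by simp
  have bb: "btw (fst a) (fst b) (fst q)" "btw (snd a) (snd b) (snd q)" using l1_eq_btw[OF t(2)] by auto
  have PS: "path_set (a # b # r) = closed_segment a b \<union> path_set (b # r)" by (rule path_set_Cons2)
  have Hs: "horiz_segs (b # r) \<subseteq> horiz_segs (a # b # r)" by (auto simp: horiz_segs_Cons2)
  have Vs: "vert_segs (b # r) \<subseteq> vert_segs (a # b # r)" by (auto simp: vert_segs_Cons2)
  have bPS: "b \<in> path_set (b # r)" by (simp add: path_set_def)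
  have bb0: "btw (fst a) (fst b) (fst q)" "btw (snd a) (snd b) (snd q)" using l1_eq_btw[OF t(2)] by auto
  have IHd: "b = q \<or>
     (fst b = fst q \<and> snd b \<noteq> snd q \<and> closed_segment b q \<subseteq> path_set (b # r) \<and> b \<in> \<Union>(vert_segs (b # r))) \<or>
     (snd b = snd q \<and> fst b \<noteq> fst q \<and> closed_segment b q \<subseteq> path_set (b # r) \<and> b \<in> \<Union>(horiz_segs (b # r))) \<or>
     (fst b \<noteq> fst q \<and> snd b \<noteq> snd q \<and> LA b q \<subseteq> path_set (b # r) \<and> b \<in> \<Union>(horiz_segs (b # r)) \<and> (fst q, snd b) \<in> corner_points (b # r)) \<or>
     (fst b \<noteq> fst q \<and> snd b \<noteq> snd q \<and> LB b q \<subseteq> path_set (b # r) \<and> b \<in> \<Union>(vert_segs (b # r)) \<and> (fst b, snd q) \<in> corner_points (b # r))"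
    using IH unfolding cinv_iff list.sel(1) q_def .
  have G: "cinv (a # b # r) \<longleftrightarrow> a = q \<or>
     (fst a = fst q \<and> snd a \<noteq> snd q \<and> closed_segment a q \<subseteq> path_set (a # b # r) \<and> a \<in> \<Union>(vert_segs (a # b # r))) \<or>
     (snd a = snd q \<and> fst a \<noteq> fst q \<and> closed_segment a q \<subseteq> path_set (a # b # r) \<and> a \<in> \<Union>(horiz_segs (a # b # r))) \<or>
     (fst a \<noteq> fst q \<and> snd a \<noteq> snd q \<and> LA a q \<subseteq> path_set (a # b # r) \<and> a \<in> \<Union>(horiz_segs (a # b # r)) \<and> (fst q, snd a) \<in> corner_points (a # b # r)) \<or>
     (fst a \<noteq> fst q \<and> snd a \<noteq> snd q \<and> LB a q \<subseteq> path_set (a # b # r) \<and> a \<in> \<Union>(vert_segs (a # b # r)) \<and> (fst a, snd q) \<in> corner_points (a # b # r))"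
    unfolding cinv_iff list.sel(1) lastq ..
  consider "a = b" | "snd a = snd b" "fst a \<noteq> fst b" | "fst a = fst b" "snd a \<noteq> snd b"
    using rect(1) by (metis prod_eq_iff)
  then show ?case
  proof cases
    case 1
    have e1: "path_set (a # b # r) = path_set (b # r)" using PS bPS 1 by auto
    have e2: "horiz_segs (a # b # r) = horiz_segs (b # r)" "vert_segs (a # b # r) = vert_segs (b # r)"
      using 1 by (simp_all add: horiz_segs_Cons2 vert_segs_Cons2)
    have e3: "corner_points (a # b # r) = corner_points (b # r)" unfolding corner_points_def e2 ..
    show ?thesis unfolding G e1 e2 e3 using IHd 1 by simp
  next
    case 2
    have abH: "closed_segment a b \<in> horiz_segs (a # b # r)" using 2 by (simp add: horiz_segs_Cons2)
    have aH: "a \<in> \<Union>(horiz_segs (a # b # r))" using abH by blast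
    have bH: "b \<in> \<Union>(horiz_segs (a # b # r))" using abH by blast
    from IHd show ?thesis
    proof (elim disjE conjE)
      assume bq: "b = q"
      have "snd a = snd q" "fst a \<noteq> fst q" using bq 2 by auto
      moreover have "closed_segment a q \<subseteq> path_set (a # b # r)" unfolding PS bq[symmetric] by blast
      ultimately show ?thesis unfolding G using aH by (intro d3) blast
    next
      assume v: "fst b = fst q" "snd b \<noteq> snd q" "closed_segment b q \<subseteq> path_set (b # r)" "b \<in> \<Union>(vert_segs (b # r))"
      have e: "(fst q, snd a) = b" using v 2 by (simp add: prod_eq_iff)
      have "b \<in> corner_points (a # b # r)" using abH v(4) Vs unfolding corner_points_def by blast
      then have "(fst q, snd a) \<in> corner_points (a # b # r)" using e by simp
      moreover have "LA a q \<subseteq> path_set (a # b # r)" unfolding PS LA_def e using v(3) by blast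
      moreover have "fst a \<noteq> fst q" "snd a \<noteq> snd q" using v 2 by auto
      ultimately show ?thesis unfolding G using aH by (intro d4) blast
    next
      assume v: "snd b = snd q" "fst b \<noteq> fst q" "closed_segment b q \<subseteq> path_set (b # r)" "b \<in> \<Union>(horiz_segs (b # r))"
      have "fst a \<noteq> fst q"
      proof
        assume "fst a = fst q"
        then have "btw (fst q) (fst b) (fst q)" using bb(1) by simp
        then have "fst b = fst q" by (rule btw_same)
        then show False using \<open>fst b \<noteq> fst q\<close> by contradiction
      qed
      moreover have "closed_segment a q = closed_segment a b \<union> closed_segment b q"
        using Un_closed_segment[OF mem_seg_h[of a b q]] v 2 bb by simp
      moreover have "snd a = snd q" using v 2 by simp
      moreover have "closed_segment a b \<union> closed_segment b q \<subseteq> path_set (a # b # r)" unfolding PS using v(3) by blast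
      ultimately show ?thesis unfolding G using aH by (intro d3) auto
    next
      assume v: "fst b \<noteq> fst q" "snd b \<noteq> snd q" "LA b q \<subseteq> path_set (b # r)" "b \<in> \<Union>(horiz_segs (b # r))" "(fst q, snd b) \<in> corner_points (b # r)"
      have "fst a \<noteq> fst q"
      proof
        assume "fst a = fst q"
        then have "btw (fst q) (fst b) (fst q)" using bb(1) by simp
        then have "fst b = fst q" by (rule btw_same)
        then show False using \<open>fst b \<noteq> fst q\<close> by contradiction
      qed
      moreover have m: "b \<in> closed_segment a (fst q, snd a)"
        by (rule mem_seg_h) (use 2 bb in auto)
      have sq: "closed_segment a (fst q, snd a) = closed_segment a b \<union> closed_segment b (fst q, snd a)"
        using Un_closed_segment[OF m] by (rule sym)
      have f5: "(fst q, snd a) \<in> corner_points (a # b # r)"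
      proof -
        have "(fst q, snd b) \<in> corner_points (a # b # r)" using v(5) CPsub by blast
        then show ?thesis using 2(1) by simp
      qed
      have f2: "snd a \<noteq> snd q" using v(2) 2(1) by simp
      have LAe: "LA a q = closed_segment a b \<union> LA b q"
      proof -
        have LAa: "LA a q = closed_segment a (fst q, snd a) \<union> closed_segment (fst q, snd a) q" by (simp add: LA_def)
        have LAb: "LA b q = closed_segment b (fst q, snd a) \<union> closed_segment (fst q, snd a) q" using 2(1) by (simp add: LA_def)
        show ?thesis unfolding LAa LAb sq by (rule Un_assoc)
      qed
      have f3: "LA a q \<subseteq> path_set (a # b # r)" unfolding PS LAe using v(3) by blast
      show ?thesis unfolding G by (rule d4) (intro conjI f2 f3 f5 aH calculation)
    next
      assume v: "fst b \<noteq> fst q" "snd b \<noteq> snd q" "LB b q \<subseteq> path_set (b # r)" "b \<in> \<Union>(vert_segs (b # r))" "(fst b, snd q) \<in> corner_points (b # r)"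
      have "b \<in> corner_points (a # b # r)" using abH v(4) Vs unfolding corner_points_def by blast
      moreover have "(fst b, snd q) \<in> corner_points (a # b # r)" using v(5) CPsub by blast
      ultimately have "b = (fst b, snd q)" using cpc by auto
      then have "snd b = snd q" by (metis snd_conv)
      then show ?thesis using v(2) by blast
    qed
  next
    case 3
    have abV: "closed_segment a b \<in> vert_segs (a # b # r)" using 3 by (simp add: vert_segs_Cons2)
    have aV: "a \<in> \<Union>(vert_segs (a # b # r))" using abV by blast
    from IHd show ?thesis
    proof (elim disjE conjE)
      assume bq: "b = q"
      have "fst a = fst q" "snd a \<noteq> snd q" using bq 3 by auto
      moreover have "closed_segment a q \<subseteq> path_set (a # b # r)" unfolding PS bq[symmetric] by blast
      ultimately show ?thesis unfolding G using aV by (intro d2) blast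
    next
      assume v: "fst b = fst q" "snd b \<noteq> snd q" "closed_segment b q \<subseteq> path_set (b # r)" "b \<in> \<Union>(vert_segs (b # r))"
      have "snd a \<noteq> snd q"
      proof
        assume "snd a = snd q"
        then have "btw (snd q) (snd b) (snd q)" using bb(2) by simp
        then have "snd b = snd q" by (rule btw_same)
        then show False using \<open>snd b \<noteq> snd q\<close> by contradiction
      qed
      moreover have "closed_segment a q = closed_segment a b \<union> closed_segment b q"
        using Un_closed_segment[OF mem_seg_v[of a b q]] v 3 bb by simp
      moreover have "fst a = fst q" using v 3 by simp
      moreover have "closed_segment a b \<union> closed_segment b q \<subseteq> path_set (a # b # r)" unfolding PS using v(3) by blast
      ultimately show ?thesis unfolding G using aV by (intro d2) auto
    next
      assume v: "snd b = snd q" "fst b \<noteq> fst q" "closed_segment b q \<subseteq> path_set (b # r)" "b \<in> \<Union>(horiz_segs (b # r))"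
      have e: "(fst a, snd q) = b" using v 3 by (simp add: prod_eq_iff)
      have "b \<in> corner_points (a # b # r)" using abV v(4) Hs unfolding corner_points_def by blast
      then have "(fst a, snd q) \<in> corner_points (a # b # r)" using e by simp
      moreover have "LB a q \<subseteq> path_set (a # b # r)" unfolding PS LB_def e using v(3) by blast
      moreover have "fst a \<noteq> fst q" "snd a \<noteq> snd q" using v 3 by auto
      ultimately show ?thesis unfolding G using aV by (intro d5) blast
    next
      assume v: "fst b \<noteq> fst q" "snd b \<noteq> snd q" "LA b q \<subseteq> path_set (b # r)" "b \<in> \<Union>(horiz_segs (b # r))" "(fst q, snd b) \<in> corner_points (b # r)"
      have "b \<in> corner_points (a # b # r)" using abV v(4) Hs unfolding corner_points_def by blast
      moreover have "(fst q, snd b) \<in> corner_points (a # b # r)" using v(5) CPsub by blast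
      ultimately have "b = (fst q, snd b)" using cpc by auto
      then have "fst b = fst q" by (metis fst_conv)
      then show ?thesis using v(1) by blast
    next
      assume v: "fst b \<noteq> fst q" "snd b \<noteq> snd q" "LB b q \<subseteq> path_set (b # r)" "b \<in> \<Union>(vert_segs (b # r))" "(fst b, snd q) \<in> corner_points (b # r)"
      have "snd a \<noteq> snd q"
      proof
        assume "snd a = snd q"
        then have "btw (snd q) (snd b) (snd q)" using bb(2) by simp
        then have "snd b = snd q" by (rule btw_same)
        then show False using \<open>snd b \<noteq> snd q\<close> by contradiction
      qed
      moreover have m: "b \<in> closed_segment a (fst a, snd q)"
        by (rule mem_seg_v) (use 3 bb in auto)
      have sq: "closed_segment a (fst a, snd q) = closed_segment a b \<union> closed_segment b (fst a, snd q)"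
        using Un_closed_segment[OF m] by (rule sym)
      have f5: "(fst a, snd q) \<in> corner_points (a # b # r)"
      proof -
        have "(fst b, snd q) \<in> corner_points (a # b # r)" using v(5) CPsub by blast
        then show ?thesis using 3(1) by simp
      qed
      have f1: "fst a \<noteq> fst q" using v(1) 3(1) by simp
      have LBe: "LB a q = closed_segment a b \<union> LB b q"
      proof -
        have LBa: "LB a q = closed_segment a (fst a, snd q) \<union> closed_segment (fst a, snd q) q" by (simp add: LB_def)
        have LBb: "LB b q = closed_segment b (fst a, snd q) \<union> closed_segment (fst a, snd q) q" using 3(1) by (simp add: LB_def)
        show ?thesis unfolding LBa LBb sq by (rule Un_assoc)
      qed
      have f3: "LB a q \<subseteq> path_set (a # b # r)" unfolding PS LBe using v(3) by blast
      show ?thesis unfolding G by (rule d5) (intro conjI f1 f3 f5 aV calculation)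
    qed
  qed
qed


lemma Lpath_basic:
  fixes p q :: pt
  shows "rect_path [p, (fst q, snd p), q]" "path_len [p, (fst q, snd p), q] = l1_dist p q"
    "rect_path [p, (fst p, snd q), q]" "path_len [p, (fst p, snd q), q] = l1_dist p q"
  by (simp_all add: rect_path_Cons2 rect_path_single path_len_Cons2 path_len_single l1_dist_def)

lemma shortest_tight:
  assumes "shortest_rect_path p q ps"
  shows "rect_path ps" "hd ps = p" "last ps = q" "path_len ps = l1_dist p q" "ps \<noteq> []"
proof -
  have r: "rect_path ps" "hd ps = p" "last ps = q"
    using assms by (auto simp: shortest_rect_path_def rect_path_between_def)
  then show "rect_path ps" "hd ps = p" "last ps = q" by auto
  show ne: "ps \<noteq> []" using r(1) by (simp add: rect_path_def)
  have "path_len ps \<le> path_len [p, (fst q, snd p), q]"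
    using assms Lpath_basic(1) by (auto simp: shortest_rect_path_def rect_path_between_def)
  moreover have "l1_dist p q \<le> path_len ps" using l1_ge[OF ne] r by simp
  ultimately show "path_len ps = l1_dist p q" using Lpath_basic(2)[of p q] by linarith
qed

lemma shortest_of_tight:
  "rect_path ps \<Longrightarrow> hd ps = p \<Longrightarrow> last ps = q \<Longrightarrow> path_len ps = l1_dist p q \<Longrightarrow> shortest_rect_path p q ps"
  unfolding shortest_rect_path_def rect_path_between_def
  using l1_ge by (metis rect_path_def)

lemma LA_path:
  fixes p q :: pt
  shows "shortest_rect_path p q [p, (fst q, snd p), q]" "at_most_one_corner [p, (fst q, snd p), q]"
    "path_set [p, (fst q, snd p), q] = LA p q"
proof -
  show "shortest_rect_path p q [p, (fst q, snd p), q]"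
    by (rule shortest_of_tight) (use Lpath_basic[of p q] in auto)
  show "path_set [p, (fst q, snd p), q] = LA p q"
    by (auto simp: path_set_Cons2 path_set_single LA_def)
  have H: "horiz_segs [p, (fst q, snd p), q] \<subseteq> {closed_segment p (fst q, snd p)}"
    by (auto simp: horiz_segs_Cons2 horiz_segs_single simp del: closed_segment_eq)
  have V: "vert_segs [p, (fst q, snd p), q] \<subseteq> {closed_segment (fst q, snd p) q}"
    by (auto simp: vert_segs_Cons2 vert_segs_single simp del: closed_segment_eq)
  have "corner_points [p, (fst q, snd p), q] \<subseteq> {(fst q, snd p)}"
  proof
    fix x assume "x \<in> corner_points [p, (fst q, snd p), q]"
    then have "x \<in> closed_segment p (fst q, snd p)" "x \<in> closed_segment (fst q, snd p) q"
      using H V unfolding corner_points_def by blast+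
    then have "snd x = snd p" "fst x = fst q"
      using seg_h[of "fst p" "snd p" "fst q"] seg_v[of "fst q" "snd p" "snd q"] by auto
    then show "x \<in> {(fst q, snd p)}" by (simp add: prod_eq_iff)
  qed
  then show "at_most_one_corner [p, (fst q, snd p), q]" unfolding at_most_one_corner_def by blast
qed

lemma LB_path:
  fixes p q :: pt
  shows "shortest_rect_path p q [p, (fst p, snd q), q]" "at_most_one_corner [p, (fst p, snd q), q]"
    "path_set [p, (fst p, snd q), q] = LB p q"
proof -
  show "shortest_rect_path p q [p, (fst p, snd q), q]"
    by (rule shortest_of_tight) (use Lpath_basic[of p q] in auto)
  show "path_set [p, (fst p, snd q), q] = LB p q"
    by (auto simp: path_set_Cons2 path_set_single LB_def)
  have V: "vert_segs [p, (fst p, snd q), q] \<subseteq> {closed_segment p (fst p, snd q)}"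
    by (auto simp: vert_segs_Cons2 vert_segs_single simp del: closed_segment_eq)
  have H: "horiz_segs [p, (fst p, snd q), q] \<subseteq> {closed_segment (fst p, snd q) q}"
    by (auto simp: horiz_segs_Cons2 horiz_segs_single simp del: closed_segment_eq)
  have "corner_points [p, (fst p, snd q), q] \<subseteq> {(fst p, snd q)}"
  proof
    fix x assume "x \<in> corner_points [p, (fst p, snd q), q]"
    then have "x \<in> closed_segment p (fst p, snd q)" "x \<in> closed_segment (fst p, snd q) q"
      using H V unfolding corner_points_def by blast+
    then have "fst x = fst p" "snd x = snd q"
      using seg_v[of "fst p" "snd p" "snd q"] seg_h[of "fst p" "snd q" "fst q"] by auto
    then show "x \<in> {(fst p, snd q)}" by (simp add: prod_eq_iff)
  qed
  then show "at_most_one_corner [p, (fst p, snd q), q]" unfolding at_most_one_corner_def by blast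
qed

lemma shortest_L:
  assumes "shortest_rect_path p q ps" "at_most_one_corner ps"
  shows "LA p q \<subseteq> path_set ps \<or> LB p q \<subseteq> path_set ps"
proof -
  note t = shortest_tight[OF assms(1)]
  obtain c where c: "corner_points ps \<subseteq> {c}" using assms(2) unfolding at_most_one_corner_def by blast
  have "cinv ps" using corner_struct[OF t(1) _ c] t by simp
  then have D: "p = q \<or>
     (fst p = fst q \<and> snd p \<noteq> snd q \<and> closed_segment p q \<subseteq> path_set ps) \<or>
     (snd p = snd q \<and> fst p \<noteq> fst q \<and> closed_segment p q \<subseteq> path_set ps) \<or>
     (LA p q \<subseteq> path_set ps) \<or> (LB p q \<subseteq> path_set ps)"
    unfolding cinv_iff t(2,3) by blast
  have pPS: "p \<in> path_set ps" using t(2,5) set_path_set hd_in_set by blast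
  from D show ?thesis
  proof (elim disjE conjE)
    assume "p = q"
    then have "LA p q = {p}" by (simp add: LA_def)
    then show ?thesis using pPS by auto
  next
    assume h: "fst p = fst q" "closed_segment p q \<subseteq> path_set ps"
    have "(fst q, snd p) = p" using h(1) by (simp add: prod_eq_iff)
    then have "LA p q = closed_segment p q" by (simp add: LA_def insert_absorb)
    then show ?thesis using h by auto
  next
    assume h: "snd p = snd q" "closed_segment p q \<subseteq> path_set ps"
    have "(fst q, snd p) = q" using h(1) by (simp add: prod_eq_iff)
    then have "LA p q = closed_segment p q" by (simp add: LA_def insert_absorb)
    then show ?thesis using h by auto
  qed auto
qed

lemma ortho_rc:
  assumes "rectilinearly_convex W"
  shows "ortho W"
proof -
  have key: "\<exists>ps. path_set ps \<subseteq> W \<and> path_set ps \<subseteq> rbox a b \<and> connected (path_set ps) \<and> a \<in> path_set ps \<and> b \<in> path_set ps"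
    if ab0: "a \<in> W" "b \<in> W" for a b
  proof -
    obtain ps where ps: "shortest_rect_path a b ps" "path_set ps \<subseteq> W"
      using assms ab0 unfolding rectilinearly_convex_def by blast
    note t = shortest_tight[OF ps(1)]
    have "path_set ps \<subseteq> rbox a b" using tight_box[of ps] t by simp
    moreover have "connected (path_set ps)" using path_set_conn t(5) by blast
    moreover have "a \<in> path_set ps" "b \<in> path_set ps"
      using t set_path_set hd_in_set last_in_set by blast+
    ultimately show ?thesis using ps(2) by blast
  qed
  show ?thesis unfolding ortho_def
  proof (intro conjI ballI allI impI)
    fix a b x assume ab: "a \<in> W" "b \<in> W" and x: "btw (fst a) x (fst b)"
    obtain P where P: "P \<subseteq> W" "P \<subseteq> rbox a b" "connected P" "a \<in> P" "b \<in> P" using key[OF ab] by blast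
    have cf: "continuous_on P fst" by (rule continuous_on_fst[OF continuous_on_id, unfolded id_def])
    have c: "connected (fst ` P)" by (rule connected_continuous_image[OF cf P(3)])
    have "x \<in> fst ` P"
    proof (cases "fst a \<le> fst b")
      case True
      then have "x \<in> {fst a..fst b}" using x by (auto simp: btw_def)
      then show ?thesis using connected_contains_Icc[OF c] P(4,5) by blast
    next
      case False
      then have "x \<in> {fst b..fst a}" using x by (auto simp: btw_def)
      then show ?thesis using connected_contains_Icc[OF c] P(4,5) by blast
    qed
    then obtain t where t: "t \<in> P" "fst t = x" by auto
    have "btw (snd a) (snd t) (snd b)" using t P(2) by (auto simp: rbox_def)
    moreover have "(x, snd t) \<in> W" using t P(1) by (metis prod.collapse subsetD)
    ultimately show "\<exists>y. btw (snd a) y (snd b) \<and> (x, y) \<in> W" by blast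
  next
    fix a b y assume ab: "a \<in> W" "b \<in> W" and y: "btw (snd a) y (snd b)"
    obtain P where P: "P \<subseteq> W" "P \<subseteq> rbox a b" "connected P" "a \<in> P" "b \<in> P" using key[OF ab] by blast
    have cf: "continuous_on P snd" by (rule continuous_on_snd[OF continuous_on_id, unfolded id_def])
    have c: "connected (snd ` P)" by (rule connected_continuous_image[OF cf P(3)])
    have "y \<in> snd ` P"
    proof (cases "snd a \<le> snd b")
      case True
      then have "y \<in> {snd a..snd b}" using y by (auto simp: btw_def)
      then show ?thesis using connected_contains_Icc[OF c] P(4,5) by blast
    next
      case False
      then have "y \<in> {snd b..snd a}" using y by (auto simp: btw_def)
      then show ?thesis using connected_contains_Icc[OF c] P(4,5) by blast
    qed
    then obtain t where t: "t \<in> P" "snd t = y" by auto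
    have "btw (fst a) (fst t) (fst b)" using t P(2) by (auto simp: rbox_def)
    moreover have "(fst t, y) \<in> W" using t P(1) by (metis prod.collapse subsetD)
    ultimately show "\<exists>x. btw (fst a) x (fst b) \<and> (x, y) \<in> W" by blast
  qed
qed



lemma inn_interior: "inn W t \<longleftrightarrow> t \<in> interior W"
proof
  assume "inn W t"
  then obtain r where r: "r > 0" "\<And>x y. \<bar>x - fst t\<bar> < r \<Longrightarrow> \<bar>y - snd t\<bar> < r \<Longrightarrow> (x, y) \<in> W"
    unfolding inn_def by blast
  have "ball t r \<subseteq> W"
  proof
    fix z assume "z \<in> ball t r"
    then have d: "dist t z < r" by simp
    have "\<bar>fst z - fst t\<bar> < r" using dist_fst_le[of t z] d by (simp add: dist_real_def abs_minus_commute)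
    moreover have "\<bar>snd z - snd t\<bar> < r" using dist_snd_le[of t z] d by (simp add: dist_real_def abs_minus_commute)
    ultimately show "z \<in> W" using r(2) by (metis prod.collapse)
  qed
  then show "t \<in> interior W" using r(1) by (meson centre_in_ball interior_maximal open_ball subsetD)
next
  assume "t \<in> interior W"
  then obtain e where e: "e > 0" "ball t e \<subseteq> W" using mem_interior by blast
  show "inn W t" unfolding inn_def
  proof (intro exI[of _ "e / 2"] conjI allI impI)
    fix x y assume hx: "\<bar>x - fst t\<bar> < e / 2" and hy: "\<bar>y - snd t\<bar> < e / 2"
    have "dist t (x, y) = sqrt ((fst t - x)\<^sup>2 + (snd t - y)\<^sup>2)"
      by (simp add: dist_Pair_Pair[of "fst t" "snd t", simplified] dist_real_def)
    also have "\<dots> \<le> \<bar>fst t - x\<bar> + \<bar>snd t - y\<bar>" by (rule sqrt_sum_squares_le_sum_abs)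
    also have "\<dots> < e" using hx hy by (simp add: abs_minus_commute)
    finally show "(x, y) \<in> W" using e(2) by auto
  qed (use e in auto)
qed

lemma coll_fst: "fst a = fst b \<Longrightarrow> fst b = fst c \<Longrightarrow> collinear {a, b, (c::pt)}"
  unfolding collinear_def
  by (rule exI[of _ "(0, 1)"]) (auto intro!: exI[of _ "snd _ - snd _"] simp: prod_eq_iff)

lemma coll_snd: "snd a = snd b \<Longrightarrow> snd b = snd c \<Longrightarrow> collinear {a, b, (c::pt)}"
  unfolding collinear_def
  by (rule exI[of _ "(1, 0)"]) (auto intro!: exI[of _ "fst _ - fst _"] simp: prod_eq_iff)

lemma incident_gen:
  fixes g h :: "pt \<Rightarrow> real"
  assumes n3: "length vs \<ge> 3" and dist: "distinct vs" and i: "i < length vs"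
    and rect: "\<forall>k<length vs. g (vs!k) = g (vs!((k+1) mod length vs)) \<or> h (vs!k) = h (vs!((k+1) mod length vs))"
    and gp: "\<And>a b c. a \<in> set vs \<Longrightarrow> b \<in> set vs \<Longrightarrow> c \<in> set vs \<Longrightarrow> a \<noteq> b \<Longrightarrow> b \<noteq> c \<Longrightarrow> a \<noteq> c \<Longrightarrow> h a = h b \<Longrightarrow> h b = h c \<Longrightarrow> False"
  shows "\<exists>k<length vs. g (vs!k) = g (vs!i) \<and> g (vs!((k+1) mod length vs)) = g (vs!i)"
proof -
  define n where "n = length vs"
  define j where "j = (if i = 0 then n - 1 else i - 1)"
  define i1 where "i1 = (i + 1) mod n"
  have jn: "j < n" using i n3 by (auto simp: j_def n_def)
  have j1: "(j + 1) mod n = i" using i n3 by (auto simp: j_def n_def)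
  have n0: "0 < n" using n3 unfolding n_def by (cases vs) auto
  have i1n: "i1 < n" using n0 unfolding i1_def by simp
  have i1': "i1 = (if i + 1 = n then 0 else i + 1)" using i by (auto simp: i1_def n_def)
  have neq: "i \<noteq> j" "i \<noteq> i1" "j \<noteq> i1" using i n3 by (auto simp: j_def i1' n_def)
  show ?thesis
  proof (cases "g (vs!i) = g (vs!i1)")
    case True then show ?thesis using i by (intro exI[of _ i]) (auto simp: i1_def n_def)
  next
    case F1: False
    show ?thesis
    proof (cases "g (vs!j) = g (vs!i)")
      case True then show ?thesis using jn j1 by (intro exI[of _ j]) (auto simp: n_def)
    next
      case F2: False
      have h1: "h (vs!i) = h (vs!i1)" using rect i F1 by (auto simp: i1_def n_def)
      have h2: "h (vs!j) = h (vs!i)" using rect jn F2 j1 by (metis n_def)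
      have d: "vs!j \<noteq> vs!i" "vs!i \<noteq> vs!i1" "vs!j \<noteq> vs!i1"
        using neq dist jn i i1n by (auto simp: nth_eq_iff_index_eq n_def)
      show ?thesis using gp[of "vs!j" "vs!i" "vs!i1"] d h1 h2 jn i i1n by (auto simp: n_def)
    qed
  qed
qed

lemma img_idx: "m \<in> f ` set vs \<Longrightarrow> \<exists>i<length vs. f (vs!i) = m"
  by (auto simp: in_set_conv_nth)

lemma nth_mod_mem: "3 \<le> length vs \<Longrightarrow> vs ! (k mod length vs) \<in> set vs"
proof -
  assume "3 \<le> length vs"
  then have "0 < length vs" by (cases vs) auto
  then show ?thesis by (intro nth_mem) simp
qed

lemma seg_g_const:
  fixes z a b :: pt
  assumes "g = fst \<or> g = snd" "z \<in> closed_segment a b" "g a = m" "g b = m"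
  shows "g z = m"
  using seg_btw[OF assms(2)] assms btw_same by auto

lemma poly_cfg:
  assumes sp: "simple_polygon vs"
    and gpos: "general_position vs"
    and rl: "rectilinear_polygon vs"
    and rc: "rectilinearly_convex (poly_region vs)"
    and Ssub: "\<Union>S \<subseteq> poly_region vs"
    and ext: "\<forall>e\<in>extreme_edges vs. \<exists>s\<in>S. s \<inter> e \<noteq> {}"
    and conn: "connected (\<Union>S)"
  shows "cfg (poly_region vs) (\<Union>S)"
proof -
  let ?W = "poly_region vs"
  let ?n = "length vs"
  have n3: "?n \<ge> 3" and dist: "distinct vs" using sp by (auto simp: simple_polygon_def)
  have fin: "finite (set vs)" by simp
  have ne: "set vs \<noteq> {}" using n3 by (cases vs) auto
  define xmin where "xmin = Min (fst ` set vs)"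
  define xmax where "xmax = Max (fst ` set vs)"
  define ymin where "ymin = Min (snd ` set vs)"
  define ymax where "ymax = Max (snd ` set vs)"
  define K where "K = {xmin..xmax} \<times> {ymin..ymax}"
  have vK: "v \<in> K" if "v \<in> set vs" for v
  proof -
    have "fst v \<in> fst ` set vs" "snd v \<in> snd ` set vs" using that by auto
    then show ?thesis using fin unfolding K_def xmin_def xmax_def ymin_def ymax_def
      by (auto intro: Min_le Max_ge simp: mem_Times_iff)
  qed
  have cK: "convex K" unfolding K_def by (intro convex_Times convex_real_interval)
  have edge_sub: "poly_edge vs k \<subseteq> K" if "k < ?n" for k
    unfolding poly_edge_def using that n3 nth_mod_mem[OF n3, of "k+1"]
    by (intro closed_segment_subset vK cK) auto
  have bK: "poly_boundary vs \<subseteq> K" unfolding poly_boundary_def poly_edges_def using edge_sub by blast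
  have "inside (poly_boundary vs) - K \<subseteq> inside K" by (rule inside_mono[OF bK])
  then have "inside (poly_boundary vs) \<subseteq> K" using inside_convex[OF cK] by blast
  then have WK: "?W \<subseteq> K" using bK by (simp add: poly_region_def)
  have edgeW: "poly_edge vs k \<subseteq> ?W" if "k < ?n" for k
    using that unfolding poly_region_def poly_boundary_def poly_edges_def by blast
  have vW: "vs!k \<in> ?W" if "k < ?n" for k
    using edgeW[OF that] unfolding poly_edge_def by auto
  obtain ix where ix: "ix < ?n" "fst (vs!ix) = xmin"
    using img_idx[OF Min_in[of "fst ` set vs"]] fin ne unfolding xmin_def by auto
  obtain iX where iX: "iX < ?n" "fst (vs!iX) = xmax"
    using img_idx[OF Max_in[of "fst ` set vs"]] fin ne unfolding xmax_def by auto
  obtain iy where iy: "iy < ?n" "snd (vs!iy) = ymin"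
    using img_idx[OF Min_in[of "snd ` set vs"]] fin ne unfolding ymin_def by auto
  obtain iY where iY: "iY < ?n" "snd (vs!iY) = ymax"
    using img_idx[OF Max_in[of "snd ` set vs"]] fin ne unfolding ymax_def by auto
  have i1: "Inf (fst ` ?W) = xmin" using vW[OF ix(1)] ix WK by (intro cInf_eq_minimum) (auto simp: K_def)
  have i2: "Sup (fst ` ?W) = xmax" using vW[OF iX(1)] iX WK by (intro cSup_eq_maximum) (auto simp: K_def)
  have i3: "Inf (snd ` ?W) = ymin" using vW[OF iy(1)] iy WK by (intro cInf_eq_minimum) (auto simp: K_def)
  have i4: "Sup (snd ` ?W) = ymax" using vW[OF iY(1)] iY WK by (intro cSup_eq_maximum) (auto simp: K_def)
  have BB: "bounding_box ?W = K" unfolding bounding_box_def i1 i2 i3 i4 K_def by auto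
  have frK: "z \<in> frontier K" if "z \<in> K" "fst z = xmin \<or> fst z = xmax \<or> snd z = ymin \<or> snd z = ymax" for z
  proof -
    have "closed K" unfolding K_def by (intro closed_Times closed_real_atLeastAtMost)
    moreover have "interior K = {xmin<..<xmax} \<times> {ymin<..<ymax}" unfolding K_def interior_Times by simp
    ultimately show ?thesis using that unfolding frontier_def by (auto simp: mem_Times_iff)
  qed
  have rect': "\<forall>k<?n. fst (vs!k) = fst (vs!((k+1) mod ?n)) \<or> snd (vs!k) = snd (vs!((k+1) mod ?n))"
    using rl by (simp add: rectilinear_polygon_def)
  have rectS: "\<forall>k<?n. snd (vs!k) = snd (vs!((k+1) mod ?n)) \<or> fst (vs!k) = fst (vs!((k+1) mod ?n))"
    using rect' by blast
  have gpf: "False" if "a \<in> set vs" "b \<in> set vs" "c \<in> set vs" "a \<noteq> b" "b \<noteq> c" "a \<noteq> c" "fst a = fst b" "fst b = fst c" for a b c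
    using gpos that coll_fst[of a b c] unfolding general_position_def by blast
  have gps: "False" if "a \<in> set vs" "b \<in> set vs" "c \<in> set vs" "a \<noteq> b" "b \<noteq> c" "a \<noteq> c" "snd a = snd b" "snd b = snd c" for a b c
    using gpos that coll_snd[of a b c] unfolding general_position_def by blast
  have side: "\<exists>s\<in>\<Union>S. g s = g (vs!i)"
    if gg: "g = fst \<or> g = snd" and ii: "i < ?n"
      and inc: "\<exists>k<?n. g (vs!k) = g (vs!i) \<and> g (vs!((k+1) mod ?n)) = g (vs!i)"
      and bd: "\<And>z. z \<in> K \<Longrightarrow> g z = g (vs!i) \<Longrightarrow> z \<in> frontier K" for g i
  proof -
    obtain k where k: "k < ?n" "g (vs!k) = g (vs!i)" "g (vs!((k+1) mod ?n)) = g (vs!i)" using inc by blast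
    have eg: "\<And>z. z \<in> poly_edge vs k \<Longrightarrow> g z = g (vs!i)"
      using seg_g_const[OF gg] k unfolding poly_edge_def by blast
    have "poly_edge vs k \<subseteq> frontier (bounding_box ?W)"
      unfolding BB using eg edge_sub[OF k(1)] bd by blast
    moreover have "poly_edge vs k \<in> poly_edges vs" using k(1) by (auto simp: poly_edges_def)
    ultimately have "poly_edge vs k \<in> extreme_edges vs" by (simp add: extreme_edges_def)
    then obtain s where "s \<in> S" "s \<inter> poly_edge vs k \<noteq> {}" using ext by blast
    then obtain z where "z \<in> \<Union>S" "z \<in> poly_edge vs k" by blast
    then show ?thesis using eg by blast
  qed
  have sL: "\<exists>s\<in>\<Union>S. fst s = xmin"
  proof -
    have "\<exists>k<?n. fst (vs!k) = fst (vs!ix) \<and> fst (vs!((k+1) mod ?n)) = fst (vs!ix)"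
      by (rule incident_gen[OF n3 dist ix(1) rect' gps])
    then show ?thesis using side[of fst ix] ix frK by auto
  qed
  have sR: "\<exists>s\<in>\<Union>S. fst s = xmax"
  proof -
    have "\<exists>k<?n. fst (vs!k) = fst (vs!iX) \<and> fst (vs!((k+1) mod ?n)) = fst (vs!iX)"
      by (rule incident_gen[OF n3 dist iX(1) rect' gps])
    then show ?thesis using side[of fst iX] iX frK by auto
  qed
  have sB: "\<exists>s\<in>\<Union>S. snd s = ymin"
  proof -
    have "\<exists>k<?n. snd (vs!k) = snd (vs!iy) \<and> snd (vs!((k+1) mod ?n)) = snd (vs!iy)"
      by (rule incident_gen[OF n3 dist iy(1) rectS gpf])
    then show ?thesis using side[of snd iy] iy frK by auto
  qed
  have sT: "\<exists>s\<in>\<Union>S. snd s = ymax"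
  proof -
    have "\<exists>k<?n. snd (vs!k) = snd (vs!iY) \<and> snd (vs!((k+1) mod ?n)) = snd (vs!iY)"
      by (rule incident_gen[OF n3 dist iY(1) rectS gpf])
    then show ?thesis using side[of snd iY] iY frK by auto
  qed
  have WK': "xmin \<le> fst t \<and> fst t \<le> xmax \<and> ymin \<le> snd t \<and> snd t \<le> ymax" if "t \<in> ?W" for t
  proof -
    have "t \<in> K" using that WK by blast
    then show ?thesis unfolding K_def by (auto simp: mem_Times_iff)
  qed
  show ?thesis unfolding cfg_def
  proof (intro conjI)
    show "ortho ?W" by (rule ortho_rc[OF rc])
    show "\<Union>S \<subseteq> ?W" by (rule Ssub)
    show "connected (\<Union>S)" by (rule conn)
    obtain s0 where "s0 \<in> \<Union>S" "fst s0 = xmin" using sL by blast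
    then show "\<exists>s\<in>\<Union>S. \<forall>t\<in>?W. fst s \<le> fst t" using WK' by (intro bexI[of _ s0]) auto
    obtain s0 where "s0 \<in> \<Union>S" "fst s0 = xmax" using sR by blast
    then show "\<exists>s\<in>\<Union>S. \<forall>t\<in>?W. fst t \<le> fst s" using WK' by (intro bexI[of _ s0]) auto
    obtain s0 where "s0 \<in> \<Union>S" "snd s0 = ymin" using sB by blast
    then show "\<exists>s\<in>\<Union>S. \<forall>t\<in>?W. snd s \<le> snd t" using WK' by (intro bexI[of _ s0]) auto
    obtain s0 where "s0 \<in> \<Union>S" "snd s0 = ymax" using sT by blast
    then show "\<exists>s\<in>\<Union>S. \<forall>t\<in>?W. snd t \<le> snd s" using WK' by (intro bexI[of _ s0]) auto
  qed
qed

theorem lemma4: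
  fixes vs :: "pt list" and S :: "pt set set"
  assumes "simple_polygon vs"
    and "general_position vs"
    and "rectilinear_polygon vs"
    and "rectilinearly_convex (poly_region vs)"
    and "finite S"
    and "\<forall>s\<in>S. is_segment s"
    and "\<Union>S \<subseteq> poly_region vs"
    and "\<forall>e\<in>extreme_edges vs. \<exists>s\<in>S. s \<inter> e \<noteq> {}"
    and "connected (\<Union>S)"
  shows "skeleton (poly_region vs) S"
proof -
  let ?W = "poly_region vs"
  have st: "cfg ?W (\<Union>S)" using poly_cfg assms by blast
  show ?thesis unfolding skeleton_def
  proof (intro conjI allI impI)
    show "\<Union>S \<subseteq> ?W" by fact
  next
    fix p q ps
    assume H: "p \<notin> interior ?W \<and> q \<notin> interior ?W \<and>
        (\<forall>ps. shortest_rect_path p q ps \<and> at_most_one_corner ps \<longrightarrow> path_set ps \<inter> interior ?W \<noteq> {})"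
      and P: "shortest_rect_path p q ps \<and> at_most_one_corner ps"
    have np: "\<not> inn ?W p" "\<not> inn ?W q" using H by (auto simp: inn_interior)
    have "path_set [p, (fst q, snd p), q] \<inter> interior ?W \<noteq> {}" using H LA_path[of p q] by blast
    then have zA: "\<exists>z\<in>LA p q. inn ?W z" using LA_path(3)[of p q] by (auto simp: inn_interior)
    have "path_set [p, (fst p, snd q), q] \<inter> interior ?W \<noteq> {}" using H LB_path[of p q] by blast
    then have zB: "\<exists>z\<in>LB p q. inn ?W z" using LB_path(3)[of p q] by (auto simp: inn_interior)
    have F: "\<Union>S \<inter> LA p q \<noteq> {} \<and> \<Union>S \<inter> LB p q \<noteq> {}" by (rule final_abs[OF st np zA zB])
    have "LA p q \<subseteq> path_set ps \<or> LB p q \<subseteq> path_set ps" using shortest_L P by blast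
    then have "\<Union>S \<inter> path_set ps \<noteq> {}" using F by blast
    then show "\<exists>s\<in>S. path_set ps \<inter> s \<noteq> {}" by blast
  qed
qed

end
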